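(* Let $n\ge1$ and $\pi\in\mathfrak B_n$ (with either sign of $\pi_1$). Then \[\sum_{T_\sigma\in\mathrm{Orb}^*(T_\pi)}x^{\mathrm{run}_B(\sigma)}=x^{\mathrm{leaf}(T_\pi)}(1+x)^{\,n-\mathrm{leaf}(T_\pi)}.\]
   Context: $\mathfrak B_n$ is the set of signed permutations $\pi=\pi_1\cdots\pi_n$ (words over $\{\pm1,\dots,\pm n\}$ with $|\pi_1|,\dots,|\pi_n|$ a permutation of $[n]$), compared as integers; set $\pi_0=0$. $\mathrm{run}_B(\pi)$ is $1$ plus the number of $i\in\{1,\dots,n-1\}$ with $\pi_{i-1}<\pi_i>\pi_{i+1}$ or $\pi_{i-1}>\pi_i<\pi_{i+1}$. Trees are rooted binary trees with each child designated left or right. A min–max tree is labeled bijectively by a totally ordered set so that each node's label is the minimum or maximum of its subtree's labels. A node with a child is inner; an inner node is a min-node (resp. max-node) if its label is the minimum (resp. maximum) of its subtree. An HR-tree is a min–max tree in which every inner node $s$ has a nonempty right subtree containing the maximum label of the subtree of $s$ if $s$ is a min-node, the minimum if $s$ is a max-node. The reading word is the in-order reading $w(T)=w(L)\,\ell_{\mathrm{root}}\,w(R)$. $\mathcal{BHR}_n$ is the set of HR-trees with label set $\{0,s_1,\dots,s_n\}$, $s_i\in\{i,-i\}$, with $0$ the first letter of $w(T)$; $T\mapsto w(T)=0\pi_1\cdots\pi_n$ is a bijection $\mathcal{BHR}_n\to\mathfrak B_n$ and $T_\pi$ is the tree with $w(T_\pi)=0\pi$. $\mathrm{leaf}(T)$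 is the number of leaves of $T$ (the node $0$ included if it is a leaf). Modified HR-action: for $i\in[n]$ and $T_\pi\in\mathcal{BHR}_n$, let $v$ be the node labeled $\pi_i$. If $v$ is a leaf, or if the node labeled $0$ is a leaf whose parent is $v$, then $\widehat\psi_i(T_\pi)=T_\pi$. Otherwise let $R$ consist of $\pi_i$ and the labels of the right subtree of $v$; relabel $v$ and its right subtree, keeping the shape, so that $v$ receives $\max R$ if $v$ is a min-node and $\min R$ if $v$ is a max-node, the right subtree nodes receiving the remaining elements of $R$ by the order-preserving bijection from their old labels; other labels unchanged. The $\widehat\psi_i$ are commuting involutions and $\mathrm{Orb}^*(T)$ is the set of trees obtained from $T$ by compositions of the $\widehat\psi_i$, $i\in[n]$. *)

theory Defs
  imports "HOL-Library.Tree" "HOL-Computational_Algebra.Polynomial"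
begin

definition signed_perms :: "nat \<Rightarrow> int list set" where
  "signed_perms n = {p. length p = n \<and> distinct (map (\<lambda>x. nat \<bar>x\<bar>) p)
                        \<and> set (map (\<lambda>x. nat \<bar>x\<bar>) p) = {1..n}}"

definition runB :: "int list \<Rightarrow> nat" where
  "runB p = (let w = 0 # p; n = length p in
     1 + card {i. 1 \<le> i \<and> i \<le> n - 1 \<and>
        ((w!(i-1) < w!i \<and> w!i > w!(i+1)) \<or> (w!(i-1) > w!i \<and> w!i < w!(i+1)))})"

text \<open>Trees: rooted binary trees with left/right children; Leaf is the empty tree,
  a node Node l a r is a leaf iff l and r are both empty.\<close>
definition is_leaf_node :: "'a tree \<Rightarrow> bool" where
  "is_leaf_node t = (\<exists>a. t = Node Leaf a Leaf)"

fun leaf_count :: "'a tree \<Rightarrow> nat" where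
  "leaf_count Leaf = 0"
| "leaf_count (Node l a r) =
     (if l = Leaf \<and> r = Leaf then 1 else leaf_count l + leaf_count r)"

fun hr_cond :: "int tree \<Rightarrow> bool" where
  "hr_cond Leaf = True"
| "hr_cond (Node l a r) =
     (let S = set_tree (Node l a r) in
       hr_cond l \<and> hr_cond r \<and> (a = Min S \<or> a = Max S) \<and>
       (\<not> (l = Leaf \<and> r = Leaf) \<longrightarrow>
          r \<noteq> Leaf \<and> (a = Min S \<longrightarrow> Max S \<in> set_tree r)
                 \<and> (a = Max S \<longrightarrow> Min S \<in> set_tree r)))"

definition is_HR :: "int tree \<Rightarrow> bool" where
  "is_HR t = (distinct (inorder t) \<and> hr_cond t)"

definition BHR :: "nat \<Rightarrow> int tree set" where
  "BHR n = {t. is_HR t \<and> (\<exists>p\<in>signed_perms n. inorder t = 0 # p)}"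

definition T_of :: "int list \<Rightarrow> int tree" where
  "T_of p = (THE t. is_HR t \<and> inorder t = 0 # p)"

text \<open>Order-preserving bijection from finite A onto finite B (same size).\<close>
definition op_bij :: "int set \<Rightarrow> int set \<Rightarrow> int \<Rightarrow> int" where
  "op_bij A B x = sorted_list_of_set B ! card {y\<in>A. y < x}"

fun relabel_node :: "int tree \<Rightarrow> int tree" where
  "relabel_node Leaf = Leaf"
| "relabel_node (Node l a r) =
     (if l = Leaf \<and> r = Leaf then Node l a r
      else if l = Node Leaf 0 Leaf \<or> r = Node Leaf 0 Leaf then Node l a r
      else (let S = set_tree (Node l a r); R = insert a (set_tree r) in
        if a = Min S then
          Node l (Max R) (map_tree (op_bij (set_tree r) (R - {Max R})) r)
        else if a = Max S then
          Node l (Min R) (map_tree (op_bij (set_tree r) (R - {Min R})) r)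
        else Node l a r))"

fun psi_at :: "int \<Rightarrow> int tree \<Rightarrow> int tree" where
  "psi_at c Leaf = Leaf"
| "psi_at c (Node l a r) =
     (if a = c then relabel_node (Node l a r) else Node (psi_at c l) a (psi_at c r))"

text \<open>psi_i(T): act at the node labelled pi_i, where 0 pi_1 ... pi_n is the reading word.\<close>
definition psi :: "nat \<Rightarrow> int tree \<Rightarrow> int tree" where
  "psi i t = psi_at (inorder t ! i) t"

inductive_set Orb :: "nat \<Rightarrow> int tree \<Rightarrow> int tree set" for n t where
  refl: "t \<in> Orb n t"
| step: "s \<in> Orb n t \<Longrightarrow> i \<in> {1..n} \<Longrightarrow> psi i s \<in> Orb n t"

end

theory Submission
  imports Defs
begin

lemma strict_sorted_nth_less_iff:
  assumes "sorted_wrt (<) (xs::int list)" "i < length xs" "j < length xs"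
  shows "xs!i < xs!j \<longleftrightarrow> i < j"
proof
  assume "xs!i < xs!j"
  show "i < j"
  proof (rule ccontr)
    assume "\<not> i < j"
    then have "j = i \<or> j < i" by auto
    then show False
    proof
      assume "j = i" then show False using \<open>xs!i < xs!j\<close> by simp
    next
      assume "j < i"
      then have "xs!j < xs!i" using assms sorted_wrt_nth_less by blast
      then show False using \<open>xs!i < xs!j\<close> by simp
    qed
  qed
next
  assume "i < j" then show "xs!i < xs!j" using assms sorted_wrt_nth_less by blast
qed

lemma sls_idx:
  assumes "finite (A::int set)" "x \<in> A"
  shows "sorted_list_of_set A ! card {y\<in>A. y < x} = x"
proof -
  let ?xs = "sorted_list_of_set A"
  have st: "sorted_wrt (<) ?xs" by simp
  have sx: "set ?xs = A" using assms by simp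
  have dist: "distinct ?xs" by simp
  obtain j where j: "j < length ?xs" "?xs ! j = x" using assms sx by (metis in_set_conv_nth)
  have "{y\<in>A. y < x} = set (take j ?xs)"
  proof (intro set_eqI iffI)
    fix y assume "y \<in> {y\<in>A. y < x}"
    then have "y \<in> A" "y < x" by auto
    then obtain i where i: "i < length ?xs" "?xs ! i = y" using sx by (metis in_set_conv_nth)
    have "i < j" using strict_sorted_nth_less_iff[OF st i(1) j(1)] i j \<open>y < x\<close> by simp
    then show "y \<in> set (take j ?xs)" using i j by (metis in_set_conv_nth length_take min.absorb4 nth_take)
  next
    fix y assume "y \<in> set (take j ?xs)"
    then obtain i where i: "i < length (take j ?xs)" "take j ?xs ! i = y" by (metis in_set_conv_nth)
    have ij: "i < j" "i < length ?xs" using i j by auto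
    have "?xs ! i = y" using i by simp
    moreover have "?xs ! i < x" using strict_sorted_nth_less_iff[OF st ij(2) j(1)] ij j by simp
    moreover have "?xs ! i \<in> A" using ij sx nth_mem by blast
    ultimately show "y \<in> {y\<in>A. y < x}" by auto
  qed
  then have "card {y\<in>A. y < x} = j" using dist j
    by (simp add: distinct_card)
  then show ?thesis using j by simp
qed

lemma card_less_lt:
  assumes "finite (A::int set)" "x \<in> A"
  shows "card {y\<in>A. y < x} < card A"
proof -
  have "{y\<in>A. y < x} \<subset> A" using assms by auto
  then show ?thesis using assms psubset_card_mono by blast
qed

lemma op_bij_in:
  assumes "finite A" "finite B" "card A = card B" "x \<in> A"
  shows "op_bij A B x \<in> B"
proof -
  have "card {y\<in>A. y < x} < length (sorted_list_of_set B)"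
    using card_less_lt[OF assms(1,4)] assms by simp
  then show ?thesis unfolding op_bij_def using assms(2)
    by (metis nth_mem set_sorted_list_of_set)
qed

lemma op_bij_mono:
  assumes "finite A" "finite B" "card A = card B" "x \<in> A" "y \<in> A" "x < y"
  shows "op_bij A B x < op_bij A B y"
proof -
  have sub: "{z\<in>A. z < x} \<subset> {z\<in>A. z < y}" using assms by auto
  have c1: "card {z\<in>A. z < x} < card {z\<in>A. z < y}"
    using sub assms(1) by (simp add: psubset_card_mono)
  have c2: "card {z\<in>A. z < y} < length (sorted_list_of_set B)"
    using card_less_lt[OF assms(1,5)] assms by simp
  show ?thesis unfolding op_bij_def
    using strict_sorted_nth_less_iff[of "sorted_list_of_set B"] c1 c2 by auto
qed

lemma op_bij_smono:
  assumes "finite A" "finite B" "card A = card B"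
  shows "strict_mono_on A (op_bij A B)"
  using op_bij_mono[OF assms] by (auto intro: strict_mono_onI)

lemma op_bij_image:
  assumes "finite A" "finite B" "card A = card B"
  shows "op_bij A B ` A = B"
proof -
  have sub: "op_bij A B ` A \<subseteq> B" using op_bij_in[OF assms] by auto
  have "inj_on (op_bij A B) A" using op_bij_smono[OF assms] strict_mono_on_imp_inj_on by blast
  then have "card (op_bij A B ` A) = card B" using assms by (simp add: card_image)
  then show ?thesis using sub assms(2) card_subset_eq by blast
qed

lemma op_bij_unique:
  assumes "finite (A::int set)" "strict_mono_on A f" "f ` A = B" "x \<in> A"
  shows "op_bij A B x = f x"
proof -
  have fB: "finite B" using assms by auto
  have inj: "inj_on f A" using assms(2) strict_mono_on_imp_inj_on by blast
  have le: "\<And>u v. u \<in> A \<Longrightarrow> v \<in> A \<Longrightarrow> f u < f v \<Longrightarrow> u < v"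
  proof -
    fix u v assume uv: "u \<in> A" "v \<in> A" "f u < f v"
    show "u < v"
    proof (rule ccontr)
      assume "\<not> u < v"
      then have "v < u \<or> v = u" by auto
      then show False using uv assms(2) by (auto dest: strict_mono_onD)
    qed
  qed
  have img: "f ` {y\<in>A. y < x} = {z\<in>B. z < f x}"
  proof (intro set_eqI iffI)
    fix z assume "z \<in> f ` {y\<in>A. y < x}"
    then show "z \<in> {z\<in>B. z < f x}" using assms by (auto dest: strict_mono_onD)
  next
    fix z assume "z \<in> {z\<in>B. z < f x}"
    then obtain y where "y \<in> A" "z = f y" "f y < f x" using assms by auto
    then show "z \<in> f ` {y\<in>A. y < x}" using le assms(4) by auto
  qed
  have inj2: "inj_on f {y\<in>A. y < x}" using inj inj_on_subset by fastforce
  have cc: "card {z\<in>B. z < f x} = card {y\<in>A. y < x}"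
    by (simp add: img[symmetric] card_image[OF inj2])
  have fxB: "f x \<in> B" using assms by auto
  have "op_bij A B x = sorted_list_of_set B ! card {z\<in>B. z < f x}"
    unfolding op_bij_def cc ..
  then show ?thesis using sls_idx[OF fB fxB] by simp
qed

lemma op_bij_id:
  assumes "finite (A::int set)" "x \<in> A"
  shows "op_bij A A x = x"
  using op_bij_unique[of A id A x] assms by (simp add: strict_mono_on_def)

lemma op_bij_comp:
  assumes "finite (A::int set)" "strict_mono_on A g" "x \<in> A"
  shows "op_bij (g ` A) C (g x) = op_bij A C x"
proof -
  have inj: "inj_on g A" using assms(2) strict_mono_on_imp_inj_on by blast
  have "{y\<in>g ` A. y < g x} = g ` {y\<in>A. y < x}"
  proof (intro set_eqI iffI)
    fix z assume "z \<in> {y\<in>g ` A. y < g x}"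
    then obtain y where y: "y \<in> A" "z = g y" "g y < g x" by auto
    have "y < x"
    proof (rule ccontr)
      assume "\<not> y < x" then have "x < y \<or> x = y" by auto
      moreover have "x < y \<Longrightarrow> g x < g y" using strict_mono_onD[OF assms(2) assms(3) y(1)] by blast
      ultimately show False using y(3) by auto
    qed
    then show "z \<in> g ` {y\<in>A. y < x}" using y by auto
  next
    fix z assume "z \<in> g ` {y\<in>A. y < x}"
    then obtain y where y: "y \<in> A" "y < x" "z = g y" by auto
    have "g y < g x" using strict_mono_onD[OF assms(2) y(1) assms(3) y(2)] .
    then show "z \<in> {y\<in>g ` A. y < g x}" using y by auto
  qed
  moreover have "inj_on g {y\<in>A. y < x}" using inj inj_on_subset by fastforce
  then have "card (g ` {y\<in>A. y < x}) = card {y\<in>A. y < x}"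
    by (rule card_image)
  ultimately show ?thesis unfolding op_bij_def by simp
qed

lemma op_bij_equiv:
  assumes "finite (A::int set)" "finite B" "card A = card B" "strict_mono_on B g" "x \<in> A"
    "strict_mono_on A g"
  shows "op_bij (g ` A) (g ` B) (g x) = g (op_bij A B x)"
proof -
  have "op_bij (g ` A) (g ` B) (g x) = op_bij A (g ` B) x" using op_bij_comp assms by blast
  also have "\<dots> = (g \<circ> op_bij A B) x"
  proof (rule op_bij_unique[OF assms(1) _ _ assms(5)])
    show "strict_mono_on A (g \<circ> op_bij A B)"
    proof (rule strict_mono_onI)
      fix r s assume rs: "r \<in> A" "s \<in> A" "r < s"
      show "(g \<circ> op_bij A B) r < (g \<circ> op_bij A B) s"
        using strict_mono_onD[OF assms(4) op_bij_in[OF assms(1-3) rs(1)] op_bij_in[OF assms(1-3) rs(2)]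
           op_bij_mono[OF assms(1-3) rs]] by simp
    qed
    show "(g \<circ> op_bij A B) ` A = g ` B" using op_bij_image[OF assms(1-3)] by (metis image_comp)
  qed
  finally show ?thesis by simp
qed

fun pos_psi :: "nat \<Rightarrow> int tree \<Rightarrow> int tree" where
  "pos_psi i Leaf = Leaf"
| "pos_psi i (Node l a r) =
     (if i < size l then Node (pos_psi i l) a r
      else if i = size l then relabel_node (Node l a r)
      else Node l a (pos_psi (i - size l - 1) r))"

declare relabel_node.simps(2)[simp del]

lemma psi_at_notin: "c \<notin> set_tree t \<Longrightarrow> psi_at c t = t"
  by (induction t) auto

lemma inorder_nth_Node:
  "inorder (Node l a r) ! i = (if i < size l then inorder l ! i else if i = size l then a
     else inorder r ! (i - size l - 1))"
  by (simp add: nth_append)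

lemma psi_at_pos:
  assumes "distinct (inorder t)" "i < size t"
  shows "psi_at (inorder t ! i) t = pos_psi i t"
  using assms
proof (induction t arbitrary: i)
  case Leaf then show ?case by simp
next
  case (Node l a r)
  have dl: "distinct (inorder l)" and dr: "distinct (inorder r)"
    and dis: "set_tree l \<inter> set_tree r = {}" "a \<notin> set_tree l" "a \<notin> set_tree r"
    using Node.prems by auto
  show ?case
  proof (cases "i < size l")
    case True
    have c: "inorder l ! i \<in> set_tree l" using True by (metis nth_mem set_inorder length_inorder)
    then have n: "inorder l ! i \<noteq> a" "inorder l ! i \<notin> set_tree r" using dis by auto
    have e: "inorder (Node l a r) ! i = inorder l ! i" using True by (simp only: inorder_nth_Node if_True)
    have h: "psi_at (inorder l ! i) (Node l a r) = Node (pos_psi i l) a r"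
      using n Node.IH(1)[OF dl True] psi_at_notin by simp
    show ?thesis using e h True by (simp del: inorder.simps)
  next
    case False
    show ?thesis
    proof (cases "i = size l")
      case True
      have "inorder (Node l a r) ! i = a" using True by (simp add: nth_append)
      then show ?thesis using True by (simp del: inorder.simps)
    next
      case False2: False
      have ir: "i - size l - 1 < size r" using Node.prems(2) False False2 by auto
      have c: "inorder r ! (i - size l - 1) \<in> set_tree r" using ir by (metis nth_mem set_inorder length_inorder)
      then have n: "inorder r ! (i - size l - 1) \<noteq> a" "inorder r ! (i - size l - 1) \<notin> set_tree l"
        using dis by auto
      have e: "inorder (Node l a r) ! i = inorder r ! (i - size l - 1)" using False False2
        by (simp only: inorder_nth_Node if_False)
      have h: "psi_at (inorder r ! (i - size l - 1)) (Node l a r) = Node l a (pos_psi (i - size l - 1) r)"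
        using n Node.IH(2)[OF dr ir] psi_at_notin by simp
      show ?thesis using e h False False2 by (simp del: inorder.simps)
    qed
  qed
qed

lemma psi_pos: "distinct (inorder t) \<Longrightarrow> i < size t \<Longrightarrow> psi i t = pos_psi i t"
  unfolding psi_def by (rule psi_at_pos)

lemma smono_sub: "strict_mono_on A g \<Longrightarrow> B \<subseteq> A \<Longrightarrow> strict_mono_on B g"
  by (auto simp: strict_mono_on_def)

lemma smono_Min:
  assumes "strict_mono_on S (g::int\<Rightarrow>int)" "finite S" "S \<noteq> {}"
  shows "Min (g ` S) = g (Min S)"
proof (rule Min_eqI)
  show "finite (g ` S)" using assms by simp
  show "g (Min S) \<in> g ` S" using assms by simp
  fix y assume "y \<in> g ` S"
  then obtain x where x: "x \<in> S" "y = g x" by auto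
  have "Min S \<le> x" using x assms by simp
  then have "Min S = x \<or> Min S < x" by auto
  moreover have "Min S < x \<Longrightarrow> g (Min S) < g x"
    using strict_mono_onD[OF assms(1) Min_in[OF assms(2,3)] x(1)] .
  ultimately show "g (Min S) \<le> y" using x by fastforce
qed

lemma smono_Max:
  assumes "strict_mono_on S (g::int\<Rightarrow>int)" "finite S" "S \<noteq> {}"
  shows "Max (g ` S) = g (Max S)"
proof (rule Max_eqI)
  show "finite (g ` S)" using assms by simp
  show "g (Max S) \<in> g ` S" using assms by simp
  fix y assume "y \<in> g ` S"
  then obtain x where x: "x \<in> S" "y = g x" by auto
  have "x \<le> Max S" using x assms by simp
  then have "Max S = x \<or> x < Max S" by auto
  moreover have "x < Max S \<Longrightarrow> g x < g (Max S)"
    using strict_mono_onD[OF assms(1) x(1) Max_in[OF assms(2,3)]] .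
  ultimately show "y \<le> g (Max S)" using x by fastforce
qed

lemma smono_inj_eq:
  assumes "strict_mono_on S (g::int\<Rightarrow>int)" "x \<in> S" "y \<in> S"
  shows "(g x = g y) = (x = y)"
  by (rule inj_on_eq_iff[OF strict_mono_on_imp_inj_on[OF assms(1)] assms(2,3)])

lemma smono_mem:
  assumes "strict_mono_on S (g::int\<Rightarrow>int)" "x \<in> S" "A \<subseteq> S"
  shows "(g x \<in> g ` A) = (x \<in> A)"
  by (rule inj_on_image_mem_iff[OF strict_mono_on_imp_inj_on[OF assms(1)] assms(2,3)])

lemma set_tree_Node': "set_tree (Node l a r) = insert a (set_tree l \<union> set_tree r)"
  by simp

lemma map_tree_Leaf_iff: "(map_tree g t = Leaf) = (t = Leaf)"
  by (cases t) auto

lemma hr_cond_map: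
  assumes "strict_mono_on (set_tree t) g"
  shows "hr_cond (map_tree g t) = hr_cond t"
  using assms
proof (induction t)
  case Leaf then show ?case by simp
next
  case (Node l a r)
  let ?S = "set_tree (Node l a r)"
  have sl: "strict_mono_on (set_tree l) g" and sr: "strict_mono_on (set_tree r) g"
    using Node.prems smono_sub by fastforce+
  have fS: "finite ?S" "?S \<noteq> {}" by auto
  have img: "set_tree (Node (map_tree g l) (g a) (map_tree g r)) = g ` ?S" by (simp add: tree.set_map image_Un)
  have mn: "Min (g ` ?S) = g (Min ?S)" using smono_Min[OF Node.prems fS] .
  have mx: "Max (g ` ?S) = g (Max ?S)" using smono_Max[OF Node.prems fS] .
  have aS: "a \<in> ?S" by simp
  have MinS: "Min ?S \<in> ?S" by (rule Min_in[OF fS])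
  have MaxS: "Max ?S \<in> ?S" by (rule Max_in[OF fS])
  have e1: "(g a = g (Min ?S)) = (a = Min ?S)" using smono_inj_eq[OF Node.prems aS MinS] .
  have e2: "(g a = g (Max ?S)) = (a = Max ?S)" using smono_inj_eq[OF Node.prems aS MaxS] .
  have rs: "set_tree r \<subseteq> ?S" by auto
  have e3: "(g (Max ?S) \<in> g ` set_tree r) = (Max ?S \<in> set_tree r)" using smono_mem[OF Node.prems MaxS rs] .
  have e4: "(g (Min ?S) \<in> g ` set_tree r) = (Min ?S \<in> set_tree r)" using smono_mem[OF Node.prems MinS rs] .
  have "hr_cond (map_tree g (Node l a r)) =
     (hr_cond (map_tree g l) \<and> hr_cond (map_tree g r) \<and> (g a = Min (g ` ?S) \<or> g a = Max (g ` ?S)) \<and>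
       (\<not> (map_tree g l = Leaf \<and> map_tree g r = Leaf) \<longrightarrow>
          map_tree g r \<noteq> Leaf \<and> (g a = Min (g ` ?S) \<longrightarrow> Max (g ` ?S) \<in> set_tree (map_tree g r))
                 \<and> (g a = Max (g ` ?S) \<longrightarrow> Min (g ` ?S) \<in> set_tree (map_tree g r))))"
    by (simp only: hr_cond.simps Let_def img tree.map(2))
  also have "\<dots> = hr_cond (Node l a r)"
    by (simp only: Node.IH(1)[OF sl] Node.IH(2)[OF sr] mn mx e1 e2 tree.set_map e3 e4
        map_tree_Leaf_iff hr_cond.simps Let_def)
  finally show ?case .
qed

lemma relabel_active:
  assumes "\<not> (l = Leaf \<and> r = Leaf)" "l \<noteq> Node Leaf 0 Leaf" "r \<noteq> Node Leaf 0 Leaf"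
    "set_tree (Node l a r) = S" "insert a (set_tree r) = R"
  shows "relabel_node (Node l a r) =
    (if a = Min S then Node l (Max R) (map_tree (op_bij (set_tree r) (R - {Max R})) r)
     else if a = Max S then Node l (Min R) (map_tree (op_bij (set_tree r) (R - {Min R})) r)
     else Node l a r)"
proof -
  have c1: "(l = Leaf \<and> r = Leaf) = False" using assms by simp
  have c2: "(l = Node Leaf 0 Leaf \<or> r = Node Leaf 0 Leaf) = False" using assms by simp
  show ?thesis unfolding relabel_node.simps(2) c1 c2 if_False Let_def assms(4,5) ..
qed

lemma relabel_leaf: "relabel_node (Node Leaf a Leaf) = Node Leaf a Leaf"
  by (simp add: relabel_node.simps)

lemma relabel_leaf0: "relabel_node (Node (Node Leaf 0 Leaf) a r) = Node (Node Leaf 0 Leaf) a r"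
  by (simp add: relabel_node.simps)

lemma map_op_bij:
  assumes "strict_mono_on (set_tree r \<union> B) (g::int\<Rightarrow>int)" "finite B" "card (set_tree r) = card B"
  shows "map_tree (op_bij (g ` set_tree r) (g ` B)) (map_tree g r) = map_tree g (map_tree (op_bij (set_tree r) B) r)"
proof -
  have "map_tree (op_bij (g ` set_tree r) (g ` B)) (map_tree g r) = map_tree (\<lambda>x. op_bij (g ` set_tree r) (g ` B) (g x)) r"
    by (simp add: tree.map_comp comp_def)
  also have "\<dots> = map_tree (\<lambda>x. g (op_bij (set_tree r) B x)) r"
  proof (rule tree.map_cong0)
    fix x assume "x \<in> set_tree r"
    show "op_bij (g ` set_tree r) (g ` B) (g x) = g (op_bij (set_tree r) B x)"
    proof (rule op_bij_equiv)
      show "strict_mono_on B g" using smono_sub[OF assms(1)] by blast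
      show "strict_mono_on (set_tree r) g" using smono_sub[OF assms(1)] by blast
      show "finite (set_tree r)" by simp
      show "finite B" by (rule assms(2))
      show "card (set_tree r) = card B" by (rule assms(3))
      show "x \<in> set_tree r" by fact
    qed
  qed
  also have "\<dots> = map_tree g (map_tree (op_bij (set_tree r) B) r)"
    by (simp add: tree.map_comp comp_def)
  finally show ?thesis .
qed

lemma card_R_minus:
  assumes "a \<notin> set_tree r" "m \<in> insert a (set_tree r)"
  shows "card (insert a (set_tree r) - {m}) = card (set_tree r)"
proof -
  have f: "finite (insert a (set_tree r))" by simp
  have "card (insert a (set_tree r)) = Suc (card (set_tree r))"
    using assms(1) by simp
  then show ?thesis using card_Diff_singleton[OF assms(2)] by simp
qed

lemma relabel_map:
  assumes "strict_mono_on (set_tree t) (g::int\<Rightarrow>int)" "distinct (inorder t)" "0 \<notin> set_tree t" "0 \<notin> g ` set_tree t"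
  shows "relabel_node (map_tree g t) = map_tree g (relabel_node t)"
proof (cases t)
  case Leaf then show ?thesis by simp
next
  case (Node l a r)
  show ?thesis
  proof (cases "l = Leaf \<and> r = Leaf")
    case True then show ?thesis using Node by (simp add: relabel_leaf)
  next
    case False
    define S where "S = set_tree (Node l a r)"
    define R where "R = insert a (set_tree r)"
    have n0: "l \<noteq> Node Leaf 0 Leaf" "r \<noteq> Node Leaf 0 Leaf" using assms(3) Node by auto
    have z: "0 \<notin> set_tree (map_tree g l)" "0 \<notin> set_tree (map_tree g r)"
      using assms(4) Node by (auto simp: tree.set_map)
    have n0': "map_tree g l \<noteq> Node Leaf 0 Leaf" "map_tree g r \<noteq> Node Leaf 0 Leaf"
      using z by auto
    have F': "\<not> (map_tree g l = Leaf \<and> map_tree g r = Leaf)" using False by (simp add: map_tree_Leaf_iff)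
    have sm: "strict_mono_on S g" using assms(1) Node S_def by simp
    have fS: "finite S" "S \<noteq> {}" unfolding S_def by auto
    have RS: "R \<subseteq> S" unfolding R_def S_def by auto
    have fR: "finite R" "R \<noteq> {}" unfolding R_def by auto
    have smR: "strict_mono_on R g" using sm RS smono_sub by blast
    have aS: "a \<in> S" unfolding S_def by simp
    have anr: "a \<notin> set_tree r" using assms(2) Node by auto
    have S': "set_tree (Node (map_tree g l) (g a) (map_tree g r)) = g ` S" unfolding S_def by (simp add: tree.set_map image_Un)
    have R': "insert (g a) (set_tree (map_tree g r)) = g ` R" unfolding R_def by (simp add: tree.set_map)
    have L: "relabel_node (map_tree g t) =
      (if g a = Min (g ` S) then Node (map_tree g l) (Max (g ` R)) (map_tree (op_bij (set_tree (map_tree g r)) (g ` R - {Max (g ` R)})) (map_tree g r))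
       else if g a = Max (g ` S) then Node (map_tree g l) (Min (g ` R)) (map_tree (op_bij (set_tree (map_tree g r)) (g ` R - {Min (g ` R)})) (map_tree g r))
       else Node (map_tree g l) (g a) (map_tree g r))"
      unfolding Node tree.map(2) by (rule relabel_active[OF F' n0' S' R'])
    have Rr: "relabel_node t =
      (if a = Min S then Node l (Max R) (map_tree (op_bij (set_tree r) (R - {Max R})) r)
       else if a = Max S then Node l (Min R) (map_tree (op_bij (set_tree r) (R - {Min R})) r)
       else Node l a r)"
      unfolding Node by (rule relabel_active[OF False n0 S_def[symmetric] R_def[symmetric]])
    have mnS: "Min (g ` S) = g (Min S)" and mxS: "Max (g ` S) = g (Max S)"
      using smono_Min[OF sm fS] smono_Max[OF sm fS] by auto
    have mnR: "Min (g ` R) = g (Min R)" and mxR: "Max (g ` R) = g (Max R)"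
      using smono_Min[OF smR fR] smono_Max[OF smR fR] by auto
    have e1: "(g a = g (Min S)) = (a = Min S)" using smono_inj_eq[OF sm aS Min_in[OF fS]] .
    have e2: "(g a = g (Max S)) = (a = Max S)" using smono_inj_eq[OF sm aS Max_in[OF fS]] .
    have injR: "inj_on g R" using smR strict_mono_on_imp_inj_on by blast
    have d1: "g ` R - {g (Max R)} = g ` (R - {Max R})" using injR Max_in[OF fR]
      by (simp add: inj_on_image_set_diff)
    have d2: "g ` R - {g (Min R)} = g ` (R - {Min R})" using injR Min_in[OF fR]
      by (simp add: inj_on_image_set_diff)
    have sub1: "set_tree r \<union> (R - {Max R}) \<subseteq> S" and sub2: "set_tree r \<union> (R - {Min R}) \<subseteq> S"
      unfolding R_def S_def by auto
    have m1: "map_tree (op_bij (g ` set_tree r) (g ` (R - {Max R}))) (map_tree g r) =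
        map_tree g (map_tree (op_bij (set_tree r) (R - {Max R})) r)"
      by (rule map_op_bij[OF smono_sub[OF sm sub1]]) (use fR card_R_minus[OF anr] Max_in[OF fR] in \<open>auto simp: R_def\<close>)
    have m2: "map_tree (op_bij (g ` set_tree r) (g ` (R - {Min R}))) (map_tree g r) =
        map_tree g (map_tree (op_bij (set_tree r) (R - {Min R})) r)"
      by (rule map_op_bij[OF smono_sub[OF sm sub2]]) (use fR card_R_minus[OF anr] Min_in[OF fR] in \<open>auto simp: R_def\<close>)
    show ?thesis unfolding L Rr mnS mxS mnR mxR e1 e2 d1 d2 tree.set_map m1 m2
      by (simp add: Node)
  qed
qed

lemma pos_psi_map:
  assumes "strict_mono_on (set_tree t) (g::int\<Rightarrow>int)" "distinct (inorder t)" "0 \<notin> set_tree t" "0 \<notin> g ` set_tree t"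
  shows "pos_psi i (map_tree g t) = map_tree g (pos_psi i t)"
  using assms
proof (induction t arbitrary: i)
  case Leaf then show ?case by simp
next
  case (Node l a r)
  have hl: "strict_mono_on (set_tree l) g" "distinct (inorder l)" "0 \<notin> set_tree l" "0 \<notin> g ` set_tree l"
    using Node.prems smono_sub by auto
  have hr: "strict_mono_on (set_tree r) g" "distinct (inorder r)" "0 \<notin> set_tree r" "0 \<notin> g ` set_tree r"
    using Node.prems smono_sub by auto
  show ?case
  proof (cases "i < size l")
    case True then show ?thesis using Node.IH(1)[OF hl] by simp
  next
    case False
    show ?thesis
    proof (cases "i = size l")
      case True
      then have "pos_psi i (map_tree g (Node l a r)) = relabel_node (map_tree g (Node l a r))" by simp
      also have "\<dots> = map_tree g (relabel_node (Node l a r))" by (rule relabel_map[OF Node.prems])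
      finally show ?thesis using True by simp
    next
      case False2: False
      then show ?thesis using False Node.IH(2)[OF hr] by simp
    qed
  qed
qed

definition midc :: "bool option \<Rightarrow> bool \<Rightarrow> bool \<Rightarrow> bool \<Rightarrow> bool option \<Rightarrow> nat" where
  "midc dp ll rl tau dq = (if ll \<and> rl then (if dp \<noteq> None \<and> dp = dq then 1 else 0)
     else if \<not> ll then 1 else (if dp = Some (\<not> tau) then 1 else 0))"

fun cnt :: "bool option \<Rightarrow> int tree \<Rightarrow> bool option \<Rightarrow> nat" where
  "cnt dp Leaf dq = 0"
| "cnt dp (Node l a r) dq = cnt dp l (Some (a = Max (set_tree (Node l a r))))
     + midc dp (l = Leaf) (r = Leaf) (a = Max (set_tree (Node l a r))) dq
     + cnt (Some (a = Max (set_tree (Node l a r)))) r dq"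

declare cnt.simps(2)[simp del]

lemma cnt_node: "set_tree (Node l a r) = S \<Longrightarrow> cnt dp (Node l a r) dq =
   cnt dp l (Some (a = Max S)) + midc dp (l = Leaf) (r = Leaf) (a = Max S) dq + cnt (Some (a = Max S)) r dq"
  by (simp only: cnt.simps(2))

lemma cnt_map:
  assumes "strict_mono_on (set_tree t) (g::int\<Rightarrow>int)"
  shows "cnt dp (map_tree g t) dq = cnt dp t dq"
  using assms
proof (induction t arbitrary: dp dq)
  case Leaf then show ?case by simp
next
  case (Node l a r)
  let ?S = "set_tree (Node l a r)"
  have sl: "strict_mono_on (set_tree l) g" and sr: "strict_mono_on (set_tree r) g"
    using Node.prems smono_sub by fastforce+
  have fS: "finite ?S" "?S \<noteq> {}" by auto
  have img: "set_tree (Node (map_tree g l) (g a) (map_tree g r)) = g ` ?S" by (simp add: tree.set_map image_Un)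
  have mx: "Max (g ` ?S) = g (Max ?S)" using smono_Max[OF Node.prems fS] .
  have aS: "a \<in> ?S" by simp
  have e2: "(g a = g (Max ?S)) = (a = Max ?S)" using smono_inj_eq[OF Node.prems aS Max_in[OF fS]] .
  have "cnt dp (map_tree g (Node l a r)) dq = cnt dp (map_tree g l) (Some (g a = Max (g ` ?S)))
     + midc dp (map_tree g l = Leaf) (map_tree g r = Leaf) (g a = Max (g ` ?S)) dq
     + cnt (Some (g a = Max (g ` ?S))) (map_tree g r) dq"
    by (simp only: tree.map(2) cnt_node[OF img])
  also have "\<dots> = cnt dp (Node l a r) dq"
    unfolding cnt_node[where l=l and a=a and r=r, OF HOL.refl] mx e2 map_tree_Leaf_iff
      Node.IH(1)[OF sl] Node.IH(2)[OF sr] ..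
  finally show ?case .
qed

definition good :: "bool \<Rightarrow> int tree \<Rightarrow> bool" where
  "good z t = (is_HR t \<and> (if z then (t \<noteq> Leaf \<longrightarrow> hd (inorder t) = 0) else 0 \<notin> set_tree t))"

lemma hr_node:
  assumes "hr_cond (Node l a r)" "set_tree (Node l a r) = S"
  shows "hr_cond l" "hr_cond r" "a = Min S \<or> a = Max S"
    "\<not> (l = Leaf \<and> r = Leaf) \<Longrightarrow> r \<noteq> Leaf"
    "\<not> (l = Leaf \<and> r = Leaf) \<Longrightarrow> a = Min S \<Longrightarrow> Max S \<in> set_tree r"
    "\<not> (l = Leaf \<and> r = Leaf) \<Longrightarrow> a = Max S \<Longrightarrow> Min S \<in> set_tree r"
  using assms(1) unfolding hr_cond.simps Let_def assms(2) by blast+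

lemma hr_nodeI:
  assumes "hr_cond l" "hr_cond r" "set_tree (Node l a r) = S" "a = Min S \<or> a = Max S"
    "\<not> (l = Leaf \<and> r = Leaf) \<Longrightarrow> r \<noteq> Leaf"
    "\<not> (l = Leaf \<and> r = Leaf) \<Longrightarrow> a = Min S \<Longrightarrow> Max S \<in> set_tree r"
    "\<not> (l = Leaf \<and> r = Leaf) \<Longrightarrow> a = Max S \<Longrightarrow> Min S \<in> set_tree r"
  shows "hr_cond (Node l a r)"
  unfolding hr_cond.simps Let_def assms(3) using assms by blast

lemma good_sub:
  assumes "good z (Node l a r)"
  shows "good z l" "good False r"
proof -
  have hr: "hr_cond (Node l a r)" and d: "distinct (inorder (Node l a r))"
    using assms by (auto simp: good_def is_HR_def)
  have hl: "hr_cond l" "hr_cond r" using hr_node[OF hr HOL.refl] by auto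
  have dl: "distinct (inorder l)" "distinct (inorder r)" using d by auto
  have z: "z \<Longrightarrow> hd (inorder (Node l a r)) = 0" using assms by (auto simp: good_def)
  show "good z l"
  proof (cases z)
    case True
    have "l \<noteq> Leaf \<Longrightarrow> hd (inorder l) = 0"
    proof -
      assume "l \<noteq> Leaf"
      then have "inorder l \<noteq> []" by (cases l) auto
      then show ?thesis using z True by simp
    qed
    then show ?thesis using True hl dl by (simp add: good_def is_HR_def)
  next
    case False then show ?thesis using assms hl dl by (auto simp: good_def is_HR_def)
  qed
  show "good False r"
  proof (cases z)
    case True
    have "0 \<in> insert a (set_tree l)"
    proof (cases l)
      case Leaf then show ?thesis using z True by simp
    next
      case (Node x y w)
      then have "hd (inorder l) \<in> set_tree l" by (metis hd_in_set inorder.simps(2) list.distinct(1) append_is_Nil_conv set_inorder)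
      moreover have ne: "inorder l \<noteq> []" using Node by simp
      moreover have "hd (inorder (Node l a r)) = hd (inorder l)" using ne by simp
      ultimately show ?thesis using z True by simp
    qed
    moreover have "set_tree r \<inter> insert a (set_tree l) = {}" using d by auto
    ultimately have "0 \<notin> set_tree r" by blast
    then show ?thesis using hl dl by (auto simp: good_def is_HR_def)
  next
    case False then show ?thesis using assms hl dl by (auto simp: good_def is_HR_def)
  qed
qed

lemma good_node:
  assumes "good z (Node l a r)" "good z l'" "good False r'" "set_tree l' = set_tree l" "set_tree r' = set_tree r"
    "(l' = Leaf) = (l = Leaf)" "(r' = Leaf) = (r = Leaf)"
  shows "good z (Node l' a r')"
proof -
  have hr: "hr_cond (Node l a r)" and d: "distinct (inorder (Node l a r))"
    using assms by (auto simp: good_def is_HR_def)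
  obtain S where S0: "set_tree (Node l a r) = S" by blast
  have S: "set_tree (Node l' a r') = S" using assms S0 by simp
  note h = hr_node[OF hr S0]
  have hr': "hr_cond (Node l' a r')"
  proof (rule hr_nodeI[OF _ _ S])
    show "hr_cond l'" "hr_cond r'" using assms(2,3) by (auto simp: good_def is_HR_def)
    show "a = Min S \<or> a = Max S" by (rule h(3))
    show "\<not> (l' = Leaf \<and> r' = Leaf) \<Longrightarrow> r' \<noteq> Leaf" using h(4) assms(6,7) by blast
    show "\<not> (l' = Leaf \<and> r' = Leaf) \<Longrightarrow> a = Min S \<Longrightarrow> Max S \<in> set_tree r'"
      using h(5) assms(5,6,7) by blast
    show "\<not> (l' = Leaf \<and> r' = Leaf) \<Longrightarrow> a = Max S \<Longrightarrow> Min S \<in> set_tree r'"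
      using h(6) assms(5,6,7) by blast
  qed
  have dl': "distinct (inorder l')" "distinct (inorder r')" using assms(2,3) by (auto simp: good_def is_HR_def)
  have d': "distinct (inorder (Node l' a r'))"
    using d dl' assms(4,5) by simp
  show ?thesis
  proof (cases z)
    case True
    have "hd (inorder (Node l' a r')) = 0"
    proof (cases "l' = Leaf")
      case True2: True
      then have "l = Leaf" using assms(6) by simp
      then show ?thesis using True2 True assms(1) by (auto simp: good_def)
    next
      case False
      then have "hd (inorder l') = 0" using assms(2) True by (auto simp: good_def)
      moreover have "inorder l' \<noteq> []" using False by (cases l') auto
      ultimately show ?thesis by simp
    qed
    then show ?thesis using True hr' d' by (auto simp: good_def is_HR_def)
  next
    case False
    have "0 \<notin> set_tree (Node l a r)" using assms(1) False by (simp add: good_def)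
    then have "0 \<notin> set_tree (Node l' a r')" using S S0 by metis
    then show ?thesis using hr' d' False by (simp add: good_def is_HR_def)
  qed
qed

lemma minmax_ne:
  assumes "finite S" "a \<in> S" "x \<in> S" "x \<noteq> (a::int)"
  shows "Min S \<noteq> Max S"
proof
  assume e: "Min S = Max S"
  have "Min S \<le> a" "a \<le> Max S" "Min S \<le> x" "x \<le> Max S" using assms by auto
  then show False using e assms(4) by linarith
qed

lemma flip_form:
  assumes hr: "hr_cond (Node l a r)" and d: "distinct (inorder (Node l a r))" and rL: "r \<noteq> Leaf"
    and l0: "l \<noteq> Node Leaf 0 Leaf" and z: "0 \<notin> insert a (set_tree r)"
    and S: "set_tree (Node l a r) = S" and R: "insert a (set_tree r) = R"
  shows "relabel_node (Node l a r) = Node l (if a = Min S then Max S else Min S)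
     (map_tree (op_bij (set_tree r) (R - {if a = Min S then Max S else Min S})) r)"
proof -
  note h = hr_node[OF hr S]
  have nl: "\<not> (l = Leaf \<and> r = Leaf)" using rL by simp
  have r0: "r \<noteq> Node Leaf 0 Leaf" using z by auto
  have fS: "finite S" using S[symmetric] by simp
  have RS: "R \<subseteq> S" using S R by auto
  have fR: "finite R" using R[symmetric] by simp
  note ra = relabel_active[OF nl l0 r0 S R]
  show ?thesis
  proof (cases "a = Min S")
    case True
    have m: "Max S \<in> set_tree r" using h(5)[OF nl True] .
    have "Max R = Max S"
    proof (rule Max_eqI[OF fR])
      show "Max S \<in> R" using m R by auto
      fix y assume "y \<in> R" then show "y \<le> Max S" using RS fS by auto
    qed
    then show ?thesis using ra True by simp
  next
    case False
    then have aM: "a = Max S" using h(3) by blast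
    have m: "Min S \<in> set_tree r" using h(6)[OF nl aM] .
    have "Min R = Min S"
    proof (rule Min_eqI[OF fR])
      show "Min S \<in> R" using m R by auto
      fix y assume "y \<in> R" then show "Min S \<le> y" using RS fS by auto
    qed
    then show ?thesis using ra False aM by simp
  qed
qed

context
  fixes l r :: "int tree" and a a' :: int and S R :: "int set" and \<phi> :: "int \<Rightarrow> int"
  assumes hr: "hr_cond (Node l a r)" and d: "distinct (inorder (Node l a r))" and rL: "r \<noteq> Leaf"
    and l0: "l \<noteq> Node Leaf 0 Leaf" and z: "0 \<notin> insert a (set_tree r)"
    and S: "set_tree (Node l a r) = S" and R: "insert a (set_tree r) = R"
    and a': "a' = (if a = Min S then Max S else Min S)"
    and ph: "\<phi> = op_bij (set_tree r) (R - {a'})"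
begin

lemma fl_eq: "relabel_node (Node l a r) = Node l a' (map_tree \<phi> r)"
  using flip_form[OF hr d rL l0 z S R] a' ph by simp

lemma fl_ne: "Min S \<noteq> Max S"
proof -
  have fS: "finite S" using S[symmetric] by simp
  obtain x where x: "x \<in> set_tree r" using rL by (cases r) auto
  have anr: "a \<notin> set_tree r" using d by simp
  show ?thesis using minmax_ne[OF fS, of a x] x anr S by auto
qed

lemma fl_facts0:
  "a' \<noteq> a \<and> a' \<in> set_tree r \<and> ((a' = Max S) = (\<not> (a = Max S))) \<and> ((a' = Min S) = (a = Max S))"
proof -
  note h = hr_node[OF hr S]
  have nl: "\<not> (l = Leaf \<and> r = Leaf)" using rL by simp
  show ?thesis
  proof (cases "a = Min S")
    case True
    then show ?thesis using a' fl_ne h(5)[OF nl True] by auto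
  next
    case False
    then have aM: "a = Max S" using h(3) by blast
    then show ?thesis using a' fl_ne h(6)[OF nl aM] False by auto
  qed
qed

lemma fl_facts:
  "a' \<noteq> a" "a' \<in> set_tree r" "(a' = Max S) = (\<not> (a = Max S))" "a' \<in> R"
  "(a' = Min S) = (a = Max S)"
  using fl_facts0 R by auto

lemma fl_card: "card (set_tree r) = card (R - {a'})"
  using card_R_minus[of a r a'] d fl_facts(4) R by simp

lemma fl_fin: "finite (R - {a'})" using R[symmetric] by simp

lemma fl_smono: "strict_mono_on (set_tree r) \<phi>"
  unfolding ph by (rule op_bij_smono[OF finite_set_tree fl_fin fl_card])

lemma fl_image: "\<phi> ` set_tree r = R - {a'}"
  unfolding ph by (rule op_bij_image[OF finite_set_tree fl_fin fl_card])

lemma fl_set: "set_tree (Node l a' (map_tree \<phi> r)) = S"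
  using fl_image fl_facts(4) S R by (auto simp: tree.set_map)

lemma fl_hr: "hr_cond (Node l a' (map_tree \<phi> r))"
proof (rule hr_nodeI[OF _ _ fl_set])
  note h = hr_node[OF hr S]
  show "hr_cond l" by (rule h(1))
  show "hr_cond (map_tree \<phi> r)" using hr_cond_map[OF fl_smono] h(2) by simp
  show "a' = Min S \<or> a' = Max S" using a' by simp
  note ne = fl_ne
  show "\<not> (l = Leaf \<and> map_tree \<phi> r = Leaf) \<Longrightarrow> map_tree \<phi> r \<noteq> Leaf" using rL by (simp add: map_tree_Leaf_iff)
  show "a' = Min S \<Longrightarrow> Max S \<in> set_tree (map_tree \<phi> r)"
    using fl_facts fl_image R fl_ne by (auto simp: tree.set_map)
  show "a' = Max S \<Longrightarrow> Min S \<in> set_tree (map_tree \<phi> r)"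
  proof -
    assume "a' = Max S"
    then have "a = Min S" using a' fl_facts(1) fl_ne by (auto split: if_splits)
    then show ?thesis using fl_facts fl_image R by (auto simp: tree.set_map)
  qed
qed

lemma fl_dist: "distinct (inorder (Node l a' (map_tree \<phi> r)))"
proof -
  have inj: "inj_on \<phi> (set_tree r)" using fl_smono strict_mono_on_imp_inj_on by blast
  have dl: "distinct (inorder l)" "distinct (inorder r)" and disj: "set_tree l \<inter> R = {}"
    using d R by auto
  have "distinct (map \<phi> (inorder r))" using inj dl(2) by (simp add: distinct_map)
  moreover have "set (map \<phi> (inorder r)) = R - {a'}" using fl_image by simp
  moreover have "a' \<notin> set_tree l" using fl_facts(4) disj by auto
  ultimately show ?thesis using dl(1) disj by (auto simp: inorder_map)
qed

lemma fl_inv: "relabel_node (Node l a' (map_tree \<phi> r)) = Node l a r"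
proof -
  have rL': "map_tree \<phi> r \<noteq> Leaf" using rL by (simp add: map_tree_Leaf_iff)
  have R': "insert a' (set_tree (map_tree \<phi> r)) = R" using fl_image fl_facts(4) by (auto simp: tree.set_map)
  have z0: "0 \<notin> R" using z R by simp
  have z': "0 \<notin> insert a' (set_tree (map_tree \<phi> r))" unfolding R' by (rule z0)
  have a'': "(if a' = Min S then Max S else Min S) = a"
    using a' fl_facts(1) hr_node(3)[OF hr S] fl_ne by (auto split: if_splits)
  have "relabel_node (Node l a' (map_tree \<phi> r)) = Node l a
     (map_tree (op_bij (set_tree (map_tree \<phi> r)) (R - {a})) (map_tree \<phi> r))"
    using flip_form[OF fl_hr fl_dist rL' l0 z' fl_set R'] a'' by simp
  also have "map_tree (op_bij (set_tree (map_tree \<phi> r)) (R - {a})) (map_tree \<phi> r) = r"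
  proof -
    have Ra: "R - {a} = set_tree r" using R d by auto
    have "map_tree (op_bij (set_tree (map_tree \<phi> r)) (R - {a})) (map_tree \<phi> r)
        = map_tree (\<lambda>x. op_bij (\<phi> ` set_tree r) (set_tree r) (\<phi> x)) r"
      by (simp add: tree.map_comp comp_def tree.set_map Ra)
    also have "\<dots> = map_tree id r"
    proof (rule tree.map_cong0)
      fix x assume x: "x \<in> set_tree r"
      have "op_bij (\<phi> ` set_tree r) (set_tree r) (\<phi> x) = op_bij (set_tree r) (set_tree r) x"
        by (rule op_bij_comp[OF finite_set_tree fl_smono x])
      also have "\<dots> = x" by (rule op_bij_id[OF finite_set_tree x])
      finally show "op_bij (\<phi> ` set_tree r) (set_tree r) (\<phi> x) = id x" by simp
    qed
    finally show ?thesis by (simp add: tree.map_id)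
  qed
  finally show ?thesis .
qed

lemma fl_cnt: "cnt dp (Node l a' (map_tree \<phi> r)) dq =
   cnt dp l (Some (\<not> (a = Max S))) + midc dp (l = Leaf) False (\<not> (a = Max S)) dq + cnt (Some (\<not> (a = Max S))) r dq"
  unfolding cnt_node[OF fl_set] cnt_map[OF fl_smono] fl_facts(3) using rL by (simp add: map_tree_Leaf_iff)

end

definition act :: "bool \<Rightarrow> int tree \<Rightarrow> int tree \<Rightarrow> bool" where
  "act z l r = (\<not> ((z \<and> l = Leaf) \<or> (l = Leaf \<and> r = Leaf) \<or> l = Node Leaf 0 Leaf))"

fun orb :: "bool \<Rightarrow> int tree \<Rightarrow> int tree set" where
  "orb z Leaf = {Leaf}"
| "orb z (Node l a r) = (let B = (\<lambda>p. Node (fst p) a (snd p)) ` (orb z l \<times> orb False r) in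
     if act z l r then B \<union> relabel_node ` B else B)"

lemma orb_node_cases:
  assumes "s \<in> orb z (Node l a r)"
  obtains l' r' where "l' \<in> orb z l" "r' \<in> orb False r" "s = Node l' a r'"
  | l' r' where "l' \<in> orb z l" "r' \<in> orb False r" "s = relabel_node (Node l' a r')" "act z l r"
  using assms by (auto simp: Let_def split: if_splits)

lemma orb_fin: "finite (orb z t)"
  by (induction t arbitrary: z) (auto simp: Let_def)

lemma act_facts:
  assumes "good z (Node l a r)" "act z l r"
  shows "r \<noteq> Leaf" "0 \<notin> insert a (set_tree r)" "l \<noteq> Node Leaf 0 Leaf"
proof -
  have hr: "hr_cond (Node l a r)" and d: "distinct (inorder (Node l a r))" using assms(1) by (auto simp: good_def is_HR_def)
  have nl: "\<not> (l = Leaf \<and> r = Leaf)" using assms(2) by (auto simp: act_def)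
  show "r \<noteq> Leaf" using hr_node(4)[OF hr HOL.refl nl] .
  show "l \<noteq> Node Leaf 0 Leaf" using assms(2) by (auto simp: act_def)
  have r0: "0 \<notin> set_tree r" using good_sub(2)[OF assms(1)] by (simp add: good_def)
  have "a \<noteq> 0"
  proof (cases z)
    case True
    then have lL: "l \<noteq> Leaf" using assms(2) by (auto simp: act_def)
    then have ne: "inorder l \<noteq> []" by (cases l) auto
    have "hd (inorder l) = 0" using good_sub(1)[OF assms(1)] True lL by (simp add: good_def)
    then have "0 \<in> set_tree l" using ne by (metis hd_in_set set_inorder)
    then show ?thesis using d by auto
  next
    case False then show ?thesis using assms(1) by (simp add: good_def)
  qed
  then show "0 \<notin> insert a (set_tree r)" using r0 by simp
qed

lemma size_relabel: "size (relabel_node t) = size t"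
proof (cases t)
  case Leaf then show ?thesis by simp
next
  case (Node l a r) then show ?thesis by (simp add: relabel_node.simps Let_def)
qed

lemma size_pos_psi: "size (pos_psi i t) = size t"
  by (induction t arbitrary: i) (auto simp: size_relabel)

lemma relabel_good:
  assumes g: "good z (Node l a r)" and ac: "act z l r"
  defines "S \<equiv> set_tree (Node l a r)"
  defines "R \<equiv> insert a (set_tree r)"
  defines "a' \<equiv> (if a = Min S then Max S else Min S)"
  defines "\<phi> \<equiv> op_bij (set_tree r) (R - {a'})"
  shows "relabel_node (Node l a r) = Node l a' (map_tree \<phi> r)"
    "good z (relabel_node (Node l a r))"
    "set_tree (relabel_node (Node l a r)) = set_tree (Node l a r)"
    "relabel_node (relabel_node (Node l a r)) = Node l a r"
    "strict_mono_on (set_tree r) \<phi>" "0 \<notin> \<phi> ` set_tree r"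
    "cnt dp (relabel_node (Node l a r)) dq =
      cnt dp l (Some (\<not> (a = Max S))) + midc dp (l = Leaf) False (\<not> (a = Max S)) dq + cnt (Some (\<not> (a = Max S))) r dq"
proof -
  have hr: "hr_cond (Node l a r)" and d: "distinct (inorder (Node l a r))" using g by (auto simp: good_def is_HR_def)
  note af = act_facts[OF g ac]
  have sS: "set_tree (Node l a r) = S" unfolding S_def ..
  have sR: "insert a (set_tree r) = R" unfolding R_def ..
  have sa: "a' = (if a = Min S then Max S else Min S)" unfolding a'_def ..
  have sp: "\<phi> = op_bij (set_tree r) (R - {a'})" unfolding \<phi>_def ..
  note fl = fl_eq[OF hr d af(1) af(3) af(2) sS sR sa sp]
  show e: "relabel_node (Node l a r) = Node l a' (map_tree \<phi> r)" by (rule fl)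
  note fs = fl_set[OF hr d af(1) af(3) af(2) sS sR sa sp]
  show "set_tree (relabel_node (Node l a r)) = set_tree (Node l a r)" unfolding e fs S_def ..
  show "relabel_node (relabel_node (Node l a r)) = Node l a r"
    unfolding e by (rule fl_inv[OF hr d af(1) af(3) af(2) sS sR sa sp])
  show sm: "strict_mono_on (set_tree r) \<phi>"
    by (rule fl_smono[OF hr d af(1) af(3) af(2) sS sR sa sp])
  have im: "\<phi> ` set_tree r = R - {a'}"
    by (rule fl_image[OF hr d af(1) af(3) af(2) sS sR sa sp])
  show "0 \<notin> \<phi> ` set_tree r" unfolding im using af(2) R_def by simp
  show "cnt dp (relabel_node (Node l a r)) dq =
      cnt dp l (Some (\<not> (a = Max S))) + midc dp (l = Leaf) False (\<not> (a = Max S)) dq + cnt (Some (\<not> (a = Max S))) r dq"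
    unfolding e by (rule fl_cnt[OF hr d af(1) af(3) af(2) sS sR sa sp])
  have hr': "hr_cond (Node l a' (map_tree \<phi> r))"
    by (rule fl_hr[OF hr d af(1) af(3) af(2) sS sR sa sp])
  have d': "distinct (inorder (Node l a' (map_tree \<phi> r)))"
    by (rule fl_dist[OF hr d af(1) af(3) af(2) sS sR sa sp])
  show "good z (relabel_node (Node l a r))"
  proof (cases z)
    case True
    then have lL: "l \<noteq> Leaf" using ac by (auto simp: act_def)
    then have ne: "inorder l \<noteq> []" by (cases l) auto
    have "hd (inorder l) = 0" using good_sub(1)[OF g] True lL by (simp add: good_def)
    then have h0: "hd (inorder (Node l a' (map_tree \<phi> r))) = 0" using ne by simp
    have zT: "z = True" using True by simp
    show ?thesis unfolding e good_def is_HR_def by (simp only: zT if_True hr' d' h0 simp_thms)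
  next
    case False
    have "0 \<notin> S" using g False S_def by (simp add: good_def)
    then have z0: "0 \<notin> set_tree (Node l a' (map_tree \<phi> r))" unfolding fs .
    have zF: "z = False" using False by simp
    show ?thesis unfolding e good_def is_HR_def by (simp only: zF if_False hr' d' z0 simp_thms)
  qed
qed

lemma orb_props:
  assumes "good z t" "s \<in> orb z t"
  shows "good z s \<and> set_tree s = set_tree t \<and> size s = size t \<and> (s = Leaf \<longleftrightarrow> t = Leaf)
     \<and> (s = Node Leaf 0 Leaf \<longleftrightarrow> t = Node Leaf 0 Leaf) \<and> (\<forall>x. t = Node Leaf x Leaf \<longrightarrow> s = t)"
  using assms
proof (induction t arbitrary: s z)
  case Leaf then show ?case by simp
next
  case (Node l a r)
  have gl: "good z l" and gr: "good False r" using good_sub[OF Node.prems(1)] by auto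
  have base: "good z (Node l' a r') \<and> set_tree (Node l' a r') = set_tree (Node l a r) \<and> size (Node l' a r') = size (Node l a r)
     \<and> (Node l' a r' = Node Leaf 0 Leaf \<longleftrightarrow> Node l a r = Node Leaf 0 Leaf) \<and> (\<forall>x. Node l a r = Node Leaf x Leaf \<longrightarrow> Node l' a r' = Node l a r)
     \<and> act z l' r' = act z l r"
    if l': "l' \<in> orb z l" and r': "r' \<in> orb False r" for l' r'
  proof -
    note il = Node.IH(1)[OF gl l'] and ir = Node.IH(2)[OF gr r']
    have "good z (Node l' a r')" using good_node[OF Node.prems(1)] il ir by blast
    moreover have "act z l' r' = act z l r" using il ir by (simp add: act_def)
    ultimately show ?thesis using il ir by auto
  qed
  show ?case
  proof (cases rule: orb_node_cases[OF Node.prems(2)])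
    case (1 l' r')
    then show ?thesis using base[OF 1(1,2)] by auto
  next
    case (2 l' r')
    note b = base[OF 2(1,2)]
    have ac': "act z l' r'" using b 2(4) by simp
    have g': "good z (Node l' a r')" using b by simp
    note rg = relabel_good[OF g' ac']
    have rL: "r \<noteq> Leaf" using act_facts(1)[OF Node.prems(1) 2(4)] .
    have "size (relabel_node (Node l' a r')) = size (Node l a r)" using b by (simp add: size_relabel)
    moreover have "relabel_node (Node l' a r') \<noteq> Leaf" using rg(1) by simp
    moreover have "relabel_node (Node l' a r') \<noteq> Node Leaf 0 Leaf" using rg(1) act_facts(1)[OF g' ac']
      by (simp add: map_tree_Leaf_iff)
    ultimately show ?thesis using 2(3) rg(2,3) b rL by auto
  qed
qed

definition flipdata :: "int set \<Rightarrow> int \<Rightarrow> int set \<Rightarrow> int \<times> (int \<Rightarrow> int)" where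
  "flipdata S a Rr = (let a' = (if a = Min S then Max S else Min S) in (a', op_bij Rr (insert a Rr - {a'})))"

lemma relabel_fd:
  assumes "good z (Node l a r)" "act z l r"
  shows "relabel_node (Node l a r) = Node l (fst (flipdata (set_tree (Node l a r)) a (set_tree r)))
            (map_tree (snd (flipdata (set_tree (Node l a r)) a (set_tree r))) r)"
    "strict_mono_on (set_tree r) (snd (flipdata (set_tree (Node l a r)) a (set_tree r)))"
    "0 \<notin> (snd (flipdata (set_tree (Node l a r)) a (set_tree r))) ` set_tree r"
  using relabel_good(1,5,6)[OF assms] unfolding flipdata_def Let_def by simp_all

lemma act_cong:
  assumes "good z (Node l a r)" "l' \<in> orb z l" "r' \<in> orb False r"
  shows "act z l' r' = act z l r" "good z (Node l' a r')" "set_tree l' = set_tree l" "set_tree r' = set_tree r"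
    "size l' = size l" "size r' = size r" "good z l'" "good False r'"
proof -
  have gl: "good z l" and gr: "good False r" using good_sub[OF assms(1)] by auto
  note il = orb_props[OF gl assms(2)] and ir = orb_props[OF gr assms(3)]
  show "act z l' r' = act z l r" using il ir by (simp add: act_def)
  show "good z (Node l' a r')" using good_node[OF assms(1)] il ir by blast
  show "set_tree l' = set_tree l" "set_tree r' = set_tree r" "size l' = size l" "size r' = size r"
    "good z l'" "good False r'" using il ir by auto
qed

lemma orb_closed:
  assumes "good z t" "s \<in> orb z t" "i < size t" "z \<Longrightarrow> i \<noteq> 0"
  shows "pos_psi i s \<in> orb z t"
  using assms
proof (induction t arbitrary: s z i)
  case Leaf then show ?case by simp
next
  case (Node l a r)
  have gl: "good z l" and gr: "good False r" using good_sub[OF Node.prems(1)] by auto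
  let ?B = "(\<lambda>p. Node (fst p) a (snd p)) ` (orb z l \<times> orb False r)"
  have Bsub: "?B \<subseteq> orb z (Node l a r)" by (auto simp: Let_def)
  have Rsub: "act z l r \<Longrightarrow> relabel_node ` ?B \<subseteq> orb z (Node l a r)" by (auto simp: Let_def)
  have inB: "Node x a y \<in> orb z (Node l a r)" if "x \<in> orb z l" "y \<in> orb False r" for x y
    using Bsub that by force
  have inR: "relabel_node (Node x a y) \<in> orb z (Node l a r)" if "x \<in> orb z l" "y \<in> orb False r" "act z l r" for x y
    using Rsub that by force
  show ?case
  proof (cases rule: orb_node_cases[OF Node.prems(2)])
    case (1 l' r')
    note ac = act_cong[OF Node.prems(1) 1(1,2)]
    consider "i < size l" | "i = size l" | "i > size l" by linarith
    then show ?thesis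
    proof cases
      case c: 1
      have "pos_psi i l' \<in> orb z l" using Node.IH(1)[OF gl 1(1) c] Node.prems(4) by blast
      then show ?thesis using 1(3) c ac inB[OF _ 1(2)] by simp
    next
      case c: 2
      have ps: "pos_psi i s = relabel_node (Node l' a r')" using 1(3) c ac by simp
      show ?thesis
      proof (cases "act z l r")
        case True then show ?thesis using ps inR[OF 1(1,2)] by simp
      next
        case False
        then consider "z \<and> l = Leaf" | "l = Leaf \<and> r = Leaf" | "l = Node Leaf 0 Leaf" by (auto simp: act_def)
        then show ?thesis
        proof cases
          case 1 then show ?thesis using c Node.prems(4) by simp
        next
          case c2: 2
          then have "l' = Leaf" "r' = Leaf" using orb_props[OF gl 1(1)] orb_props[OF gr 1(2)] by auto
          then show ?thesis using ps Node.prems(2) 1(3) by (simp add: relabel_leaf)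
        next
          case c3: 3
          then have "l' = Node Leaf 0 Leaf" using orb_props[OF gl 1(1)] by auto
          then show ?thesis using ps Node.prems(2) 1(3) by (simp add: relabel_leaf0)
        qed
      qed
    next
      case c: 3
      have j: "i - size l - 1 < size r" using c Node.prems(3) by simp
      have "pos_psi (i - size l - 1) r' \<in> orb False r" using Node.IH(2)[OF gr 1(2) j] by blast
      then show ?thesis using 1(3) c ac inB[OF 1(1)] by simp
    qed
  next
    case (2 l' r')
    note ac = act_cong[OF Node.prems(1) 2(1,2)]
    have act': "act z l' r'" using ac(1) 2(4) by simp
    note fd = relabel_fd[OF ac(2) act']
    let ?S = "set_tree (Node l' a r')"
    let ?fd = "flipdata ?S a (set_tree r')"
    consider "i < size l" | "i = size l" | "i > size l" by linarith
    then show ?thesis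
    proof cases
      case c: 1
      have l2: "pos_psi i l' \<in> orb z l" using Node.IH(1)[OF gl 2(1) c] Node.prems(4) by blast
      note ac2 = act_cong[OF Node.prems(1) l2 2(2)]
      have act2: "act z (pos_psi i l') r'" using ac2(1) 2(4) by simp
      have eS: "set_tree (Node (pos_psi i l') a r') = ?S" using ac2(3) ac(3) by simp
      have "relabel_node (Node (pos_psi i l') a r') = Node (pos_psi i l') (fst ?fd) (map_tree (snd ?fd) r')"
        using relabel_fd(1)[OF ac2(2) act2] unfolding eS .
      moreover have "pos_psi i s = Node (pos_psi i l') (fst ?fd) (map_tree (snd ?fd) r')"
        using 2(3) fd(1) c ac(5) by simp
      ultimately show ?thesis using inR[OF l2 2(2) 2(4)] by simp
    next
      case c: 2
      have "pos_psi i s = relabel_node (relabel_node (Node l' a r'))"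
        using 2(3) fd(1) c ac(5) by simp
      also have "\<dots> = Node l' a r'" by (rule relabel_good(4)[OF ac(2) act'])
      finally show ?thesis using inB[OF 2(1,2)] by simp
    next
      case c: 3
      let ?j = "i - size l - 1"
      have j: "?j < size r" using c Node.prems(3) by simp
      have r2: "pos_psi ?j r' \<in> orb False r" using Node.IH(2)[OF gr 2(2) j] by blast
      note ac2 = act_cong[OF Node.prems(1) 2(1) r2]
      have act2: "act z l' (pos_psi ?j r')" using ac2(1) 2(4) by simp
      have eS: "set_tree (Node l' a (pos_psi ?j r')) = ?S" using ac2(4) ac(4) by simp
      have eR: "set_tree (pos_psi ?j r') = set_tree r'" using ac2(4) ac(4) by simp
      have "relabel_node (Node l' a (pos_psi ?j r')) = Node l' (fst ?fd) (map_tree (snd ?fd) (pos_psi ?j r'))"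
        using relabel_fd(1)[OF ac2(2) act2] unfolding eS eR .
      moreover have "pos_psi i s = Node l' (fst ?fd) (pos_psi ?j (map_tree (snd ?fd) r'))"
        using 2(3) fd(1) c ac(5) by simp
      moreover have "pos_psi ?j (map_tree (snd ?fd) r') = map_tree (snd ?fd) (pos_psi ?j r')"
      proof (rule pos_psi_map)
        show "strict_mono_on (set_tree r') (snd ?fd)" by (rule fd(2))
        show "0 \<notin> snd ?fd ` set_tree r'" by (rule fd(3))
        show "distinct (inorder r')" "0 \<notin> set_tree r'" using ac(8) by (auto simp: good_def is_HR_def)
      qed
      ultimately show ?thesis using inR[OF 2(1) r2 2(4)] by simp
    qed
  qed
qed

abbreviation pp :: "int tree \<Rightarrow> nat \<Rightarrow> int tree" where "pp u i \<equiv> pos_psi i u"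

lemma foldl_left:
  "\<forall>i\<in>set ks. i < size l \<Longrightarrow> foldl pp (Node l a r) ks = Node (foldl pp l ks) a r"
proof (induction ks arbitrary: l)
  case Nil then show ?case by simp
next
  case (Cons i ks)
  have "pos_psi i (Node l a r) = Node (pos_psi i l) a r" using Cons.prems by simp
  moreover have "\<forall>j\<in>set ks. j < size (pos_psi i l)" using Cons.prems by (simp add: size_pos_psi)
  ultimately show ?case using Cons.IH by simp
qed

lemma foldl_right:
  "\<forall>i\<in>set ks. i < size r \<Longrightarrow> foldl pp (Node l a r) (map (\<lambda>i. i + size l + 1) ks) = Node l a (foldl pp r ks)"
proof (induction ks arbitrary: r)
  case Nil then show ?case by simp
next
  case (Cons i ks)
  have "pos_psi (i + size l + 1) (Node l a r) = Node l a (pos_psi i r)" using Cons.prems by simp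
  moreover have "\<forall>j\<in>set ks. j < size (pos_psi i r)" using Cons.prems by (simp add: size_pos_psi)
  ultimately show ?case using Cons.IH by simp
qed

lemma self_in_orb: "t \<in> orb z t"
proof (induction t arbitrary: z)
  case Leaf then show ?case by simp
next
  case (Node l a r)
  have "Node l a r \<in> (\<lambda>p. Node (fst p) a (snd p)) ` (orb z l \<times> orb False r)"
    using Node.IH by force
  then show ?case by (auto simp: Let_def)
qed

lemma orb_reach:
  assumes "good z t" "s \<in> orb z t"
  shows "\<exists>ks. (\<forall>i\<in>set ks. i < size t \<and> (z \<longrightarrow> i \<noteq> 0)) \<and> s = foldl pp t ks"
  using assms
proof (induction t arbitrary: s z)
  case Leaf then show ?case by (intro exI[of _ "[]"]) simp
next
  case (Node l a r)
  have gl: "good z l" and gr: "good False r" using good_sub[OF Node.prems(1)] by auto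
  have common: "\<exists>ks. (\<forall>i\<in>set ks. i < size (Node l a r) \<and> (z \<longrightarrow> i \<noteq> 0)) \<and> Node l' a r' = foldl pp (Node l a r) ks"
    if l': "l' \<in> orb z l" and r': "r' \<in> orb False r" for l' r'
  proof -
    obtain ks1 where ks1: "\<forall>i\<in>set ks1. i < size l \<and> (z \<longrightarrow> i \<noteq> 0)" "l' = foldl pp l ks1"
      using Node.IH(1)[OF gl l'] by blast
    obtain ks2 where ks2: "\<forall>i\<in>set ks2. i < size r" "r' = foldl pp r ks2"
      using Node.IH(2)[OF gr r'] by blast
    have sl: "size l' = size l" using act_cong(5)[OF Node.prems(1) l' r'] .
    have "foldl pp (Node l a r) (ks1 @ map (\<lambda>i. i + size l + 1) ks2)
        = foldl pp (Node l' a r) (map (\<lambda>i. i + size l' + 1) ks2)"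
      using foldl_left[of ks1 l a r] ks1 sl by simp
    also have "\<dots> = Node l' a r'" using foldl_right[of ks2 r l' a] ks2 by simp
    finally show ?thesis using ks1(1) ks2(1)
      by (intro exI[of _ "ks1 @ map (\<lambda>i. i + size l + 1) ks2"]) auto
  qed
  show ?case
  proof (cases rule: orb_node_cases[OF Node.prems(2)])
    case (1 l' r') then show ?thesis using common by blast
  next
    case (2 l' r')
    obtain ks where ks: "\<forall>i\<in>set ks. i < size (Node l a r) \<and> (z \<longrightarrow> i \<noteq> 0)" "Node l' a r' = foldl pp (Node l a r) ks"
      using common[OF 2(1,2)] by blast
    have sl: "size l' = size l" using act_cong(5)[OF Node.prems(1) 2(1,2)] .
    have nz: "z \<longrightarrow> size l \<noteq> 0" using 2(4) by (auto simp: act_def)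
    have lpos: "l \<noteq> Leaf \<Longrightarrow> 0 < size l" by (cases l) auto
    have "foldl pp (Node l a r) (ks @ [size l]) = pos_psi (size l) (Node l' a r')" using ks(2) by simp
    also have "\<dots> = s" using 2(3) sl by simp
    finally have fe: "s = foldl pp (Node l a r) (ks @ [size l])" by simp
    have v: "\<forall>i\<in>set (ks @ [size l]). i < size (Node l a r) \<and> (z \<longrightarrow> i \<noteq> 0)"
      using ks(1) nz lpos by auto
    show ?thesis using fe v by blast
  qed
qed

lemma Orb_eq:
  assumes g: "good True T" and sz: "size T = Suc n"
  shows "Orb n T = orb True T"
proof
  show "Orb n T \<subseteq> orb True T"
  proof
    fix s assume "s \<in> Orb n T"
    then show "s \<in> orb True T"
    proof (induction rule: Orb.induct)
      case refl then show ?case by (rule self_in_orb)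
    next
      case (step s i)
      have gs: "good True s" "size s = size T" using orb_props[OF g step.IH] by auto
      have d: "distinct (inorder s)" using gs by (simp add: good_def is_HR_def)
      have i: "i < size s" "i \<noteq> 0" using step.hyps(2) gs sz by auto
      have "psi i s = pos_psi i s" by (rule psi_pos[OF d i(1)])
      then show ?case using orb_closed[OF g step.IH] i gs by simp
    qed
  qed
  show "orb True T \<subseteq> Orb n T"
  proof
    fix s assume s: "s \<in> orb True T"
    obtain ks where ks: "\<forall>i\<in>set ks. i < size T \<and> i \<noteq> 0" "s = foldl pp T ks"
      using orb_reach[OF g s] by auto
    have "foldl pp T ks \<in> Orb n T \<and> foldl pp T ks \<in> orb True T" using ks(1)
    proof (induction ks rule: rev_induct)
      case Nil then show ?case using Orb.refl self_in_orb by simp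
    next
      case (snoc i ks)
      let ?u = "foldl pp T ks"
      have u: "?u \<in> Orb n T" "?u \<in> orb True T" using snoc by auto
      have gs: "good True ?u" "size ?u = size T" using orb_props[OF g u(2)] by auto
      have d: "distinct (inorder ?u)" using gs by (simp add: good_def is_HR_def)
      have i: "i < size T" "i \<noteq> 0" using snoc.prems by auto
      have e: "psi i ?u = pos_psi i ?u" using psi_pos[OF d] i gs by simp
      have "i \<in> {1..n}" using i sz by auto
      then have "psi i ?u \<in> Orb n T" using Orb.step[OF u(1)] by blast
      moreover have "pos_psi i ?u \<in> orb True T" using orb_closed[OF g u(2)] i by simp
      ultimately show ?case using e by simp
    qed
    then show "s \<in> Orb n T" using ks by simp
  qed
qed

definition X :: "nat \<Rightarrow> int poly" where "X k = monom 1 k"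

lemma X_add: "X (m + n) = X m * X n" by (simp add: X_def mult_monom)

definition G :: "bool \<Rightarrow> int tree \<Rightarrow> bool option \<Rightarrow> bool option \<Rightarrow> int poly" where
  "G z t dp q = (\<Sum>s\<in>orb z t. X (cnt dp s q))"

definition Fs :: "bool \<Rightarrow> int tree \<Rightarrow> int tree \<Rightarrow> bool option \<Rightarrow> bool option \<Rightarrow> bool \<Rightarrow> int poly" where
  "Fs z l r dp q \<sigma> = (\<Sum>l'\<in>orb z l. X (cnt dp l' (Some \<sigma>))) * X (midc dp (l = Leaf) (r = Leaf) \<sigma> q)
      * (\<Sum>r'\<in>orb False r. X (cnt (Some \<sigma>) r' q))"

lemma relabel_root_ne:
  assumes g: "good z (Node l a r)" and ac: "act z l r"
  shows "\<exists>a' r2. relabel_node (Node l a r) = Node l a' r2 \<and> a' \<noteq> a"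
proof -
  have hr: "hr_cond (Node l a r)" and d: "distinct (inorder (Node l a r))" using g by (auto simp: good_def is_HR_def)
  note af = act_facts[OF g ac]
  define S where "S = set_tree (Node l a r)"
  define R where "R = insert a (set_tree r)"
  define a' where "a' = (if a = Min S then Max S else Min S)"
  define \<phi> where "\<phi> = op_bij (set_tree r) (R - {a'})"
  have sS: "set_tree (Node l a r) = S" unfolding S_def ..
  have sR: "insert a (set_tree r) = R" unfolding R_def ..
  show ?thesis using fl_eq[OF hr d af(1) af(3) af(2) sS sR a'_def \<phi>_def]
      fl_facts(1)[OF hr d af(1) af(3) af(2) sS sR a'_def \<phi>_def] by blast
qed

lemma sum_node_B:
  assumes "finite A" "finite C"
  shows "(\<Sum>s\<in>(\<lambda>p. Node (fst p) a (snd p)) ` (A \<times> C). h s) = (\<Sum>l'\<in>A. \<Sum>r'\<in>C. h (Node l' a r'))"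
proof -
  have inj: "inj_on (\<lambda>p. Node (fst p) a (snd p)) (A \<times> C)" by (auto intro: inj_onI)
  have "(\<Sum>s\<in>(\<lambda>p. Node (fst p) a (snd p)) ` (A \<times> C). h s) = (\<Sum>p\<in>A \<times> C. h (Node (fst p) a (snd p)))"
    by (simp add: sum.reindex[OF inj])
  also have "\<dots> = (\<Sum>l'\<in>A. \<Sum>r'\<in>C. h (Node l' a r'))"
    by (simp only: sum.cartesian_product split_def)
  finally show ?thesis .
qed

lemma Fs_expand:
  "Fs z l r dp q \<sigma> = (\<Sum>l'\<in>orb z l. \<Sum>r'\<in>orb False r.
      X (cnt dp l' (Some \<sigma>)) * X (midc dp (l = Leaf) (r = Leaf) \<sigma> q) * X (cnt (Some \<sigma>) r' q))"
  unfolding Fs_def by (simp add: sum_distrib_left sum_distrib_right mult.assoc sum.swap[of _ "orb False r"])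

lemma bool_swap: "(f \<tau> :: int poly) + f (\<not> \<tau>) = f True + f False"
  by (cases \<tau>) (simp_all add: add.commute)

lemma sum_active:
  assumes g: "good z (Node l a r)" and ac: "act z l r"
  shows "G z (Node l a r) dp q = Fs z l r dp q True + Fs z l r dp q False"
proof -
  let ?B = "(\<lambda>p. Node (fst p) a (snd p)) ` (orb z l \<times> orb False r)"
  let ?S = "set_tree (Node l a r)"
  let ?tau = "a = Max ?S"
  have o: "orb z (Node l a r) = ?B \<union> relabel_node ` ?B" using ac by (simp add: Let_def)
  have fB: "finite ?B" using orb_fin by simp
  have rL: "r \<noteq> Leaf" using act_facts(1)[OF g ac] .
  have memB: "\<And>x. x \<in> ?B \<Longrightarrow> \<exists>l' r'. x = Node l' a r' \<and> l' \<in> orb z l \<and> r' \<in> orb False r" by auto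
  have disj: "?B \<inter> relabel_node ` ?B = {}"
  proof (rule ccontr)
    assume "?B \<inter> relabel_node ` ?B \<noteq> {}"
    then obtain x y where x: "x \<in> ?B" and y: "y \<in> ?B" and e: "x = relabel_node y" by blast
    obtain l1 r1 where x1: "x = Node l1 a r1" using memB[OF x] by blast
    obtain l2 r2 where y2: "y = Node l2 a r2" "l2 \<in> orb z l" "r2 \<in> orb False r" using memB[OF y] by blast
    note ac2 = act_cong[OF g y2(2,3)]
    obtain a' t2 where "relabel_node (Node l2 a r2) = Node l2 a' t2" "a' \<noteq> a"
      using relabel_root_ne[OF ac2(2)] ac2(1) ac by blast
    then show False using e x1 y2(1) by simp
  qed
  have inj: "inj_on relabel_node ?B"
  proof (rule inj_on_inverseI)
    fix x assume "x \<in> ?B"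
    then obtain l2 r2 where y2: "x = Node l2 a r2" "l2 \<in> orb z l" "r2 \<in> orb False r" using memB by blast
    note ac2 = act_cong[OF g y2(2,3)]
    show "relabel_node (relabel_node x) = x" unfolding y2(1)
      using relabel_good(4)[OF ac2(2)] ac2(1) ac by simp
  qed
  have "G z (Node l a r) dp q = (\<Sum>s\<in>?B. X (cnt dp s q)) + (\<Sum>s\<in>relabel_node ` ?B. X (cnt dp s q))"
    unfolding G_def o by (rule sum.union_disjoint) (use fB disj in auto)
  also have "(\<Sum>s\<in>relabel_node ` ?B. X (cnt dp s q)) = (\<Sum>s\<in>?B. X (cnt dp (relabel_node s) q))"
    by (simp add: sum.reindex[OF inj])
  also have "(\<Sum>s\<in>?B. X (cnt dp s q)) = Fs z l r dp q ?tau"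
  proof -
    have "(\<Sum>s\<in>?B. X (cnt dp s q)) = (\<Sum>l'\<in>orb z l. \<Sum>r'\<in>orb False r. X (cnt dp (Node l' a r') q))"
      by (rule sum_node_B[OF orb_fin orb_fin])
    also have "\<dots> = Fs z l r dp q ?tau" unfolding Fs_expand
    proof (intro sum.cong HOL.refl)
      fix l' r' assume l': "l' \<in> orb z l" and r': "r' \<in> orb False r"
      note ac2 = act_cong[OF g l' r']
      have eS: "set_tree (Node l' a r') = ?S" using ac2 by simp
      have lL: "(l' = Leaf) = (l = Leaf)" "(r' = Leaf) = (r = Leaf)" using orb_props[OF good_sub(1)[OF g] l'] orb_props[OF good_sub(2)[OF g] r'] by auto
      show "X (cnt dp (Node l' a r') q) = X (cnt dp l' (Some ?tau)) * X (midc dp (l = Leaf) (r = Leaf) ?tau q) * X (cnt (Some ?tau) r' q)"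
        unfolding cnt_node[OF eS] X_add lL ..
    qed
    finally show ?thesis .
  qed
  also have "(\<Sum>s\<in>?B. X (cnt dp (relabel_node s) q)) = Fs z l r dp q (\<not> ?tau)"
  proof -
    have "(\<Sum>s\<in>?B. X (cnt dp (relabel_node s) q)) = (\<Sum>l'\<in>orb z l. \<Sum>r'\<in>orb False r. X (cnt dp (relabel_node (Node l' a r')) q))"
      by (rule sum_node_B[OF orb_fin orb_fin])
    also have "\<dots> = Fs z l r dp q (\<not> ?tau)" unfolding Fs_expand
    proof (intro sum.cong HOL.refl)
      fix l' r' assume l': "l' \<in> orb z l" and r': "r' \<in> orb False r"
      note ac2 = act_cong[OF g l' r']
      have act2: "act z l' r'" using ac2(1) ac by simp
      have eS: "set_tree (Node l' a r') = ?S" using ac2 by simp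
      have lL: "(l' = Leaf) = (l = Leaf)" using orb_props[OF good_sub(1)[OF g] l'] by auto
      have c: "cnt dp (relabel_node (Node l' a r')) q = cnt dp l' (Some (\<not> ?tau)) + midc dp (l' = Leaf) False (\<not> ?tau) q + cnt (Some (\<not> ?tau)) r' q"
        using relabel_good(7)[OF ac2(2) act2, of dp q] unfolding eS .
      have rF: "(r = Leaf) = False" using rL by simp
      show "X (cnt dp (relabel_node (Node l' a r')) q) = X (cnt dp l' (Some (\<not> ?tau))) * X (midc dp (l = Leaf) (r = Leaf) (\<not> ?tau) q) * X (cnt (Some (\<not> ?tau)) r' q)"
        unfolding c X_add lL rF ..
    qed
    finally show ?thesis .
  qed
  finally show ?thesis using bool_swap[of "Fs z l r dp q" ?tau] by simp
qed

lemma sum_inactive: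
  assumes g: "good z (Node l a r)" and ac: "\<not> act z l r"
  shows "G z (Node l a r) dp q = Fs z l r dp q (a = Max (set_tree (Node l a r)))"
proof -
  let ?B = "(\<lambda>p. Node (fst p) a (snd p)) ` (orb z l \<times> orb False r)"
  let ?S = "set_tree (Node l a r)"
  let ?tau = "a = Max ?S"
  have o: "orb z (Node l a r) = ?B" using ac by (simp add: Let_def)
  have "G z (Node l a r) dp q = (\<Sum>l'\<in>orb z l. \<Sum>r'\<in>orb False r. X (cnt dp (Node l' a r') q))"
    unfolding G_def o by (rule sum_node_B[OF orb_fin orb_fin])
  also have "\<dots> = Fs z l r dp q ?tau" unfolding Fs_expand
  proof (intro sum.cong HOL.refl)
    fix l' r' assume l': "l' \<in> orb z l" and r': "r' \<in> orb False r"
    note ac2 = act_cong[OF g l' r']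
    have eS: "set_tree (Node l' a r') = ?S" using ac2 by simp
    have lL: "(l' = Leaf) = (l = Leaf)" "(r' = Leaf) = (r = Leaf)" using orb_props[OF good_sub(1)[OF g] l'] orb_props[OF good_sub(2)[OF g] r'] by auto
    show "X (cnt dp (Node l' a r') q) = X (cnt dp l' (Some ?tau)) * X (midc dp (l = Leaf) (r = Leaf) ?tau q) * X (cnt (Some ?tau) r' q)"
      unfolding cnt_node[OF eS] X_add lL ..
  qed
  finally show ?thesis .
qed

abbreviation P :: "int poly" where "P \<equiv> [:1, 1:]"

lemma lc_pos: "t \<noteq> Leaf \<Longrightarrow> 1 \<le> leaf_count t"
  by (induction t) auto

lemma lc_le: "leaf_count t \<le> size t"
  by (induction t) auto

lemma lc_node: "\<not> (l = Leaf \<and> r = Leaf) \<Longrightarrow> leaf_count (Node l a r) = leaf_count l + leaf_count r"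
  by simp

lemma X0: "X 0 = 1" by (simp add: X_def one_pCons)
lemma XP: "X 1 + X 0 = P" by (simp add: X_def monom_Suc one_pCons)
lemma XP': "X 0 + X 1 = P" using XP by (simp add: add.commute)
lemma XPb: "X (if d then 1 else 0) + X (if \<not> d then 1 else 0) = P"
  using XP XP' by (cases d) auto

lemma G_Leaf: "G z Leaf dp q = 1"
  by (simp add: G_def X0)

lemma Fs_unfold: "Fs z l r dp q \<sigma> = G z l dp (Some \<sigma>) * X (midc dp (l = Leaf) (r = Leaf) \<sigma> q) * G False r (Some \<sigma>) q"
  by (simp add: Fs_def G_def)

lemma midc_simps:
  "midc dp True True tau q = (if dp \<noteq> None \<and> dp = q then 1 else 0)"
  "midc dp False rl tau q = 1"
  "midc dp True False tau q = (if dp = Some (\<not> tau) then 1 else 0)"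
  by (auto simp: midc_def)

lemma no_leaf0:
  assumes "good False t" shows "t \<noteq> Node Leaf 0 Leaf"
  using assms by (auto simp: good_def)

lemma AB:
  assumes "good False t" "t \<noteq> Leaf"
  shows "(\<forall>d. G False t (Some d) None = X (leaf_count t - 1) * P ^ (size t - leaf_count t))
    \<and> (\<forall>d. G False t (Some d) (Some True) + G False t (Some d) (Some False) = X (leaf_count t - 1) * P ^ (size t - leaf_count t + 1))"
  using assms
proof (induction t)
  case Leaf then show ?case by simp
next
  case (Node l a r)
  have gl: "good False l" and gr: "good False r" using good_sub[OF Node.prems(1)] by auto
  let ?tau = "a = Max (set_tree (Node l a r))"
  show ?case
  proof (cases "l = Leaf \<and> r = Leaf")
    case True
    have na: "\<not> act False l r" using True by (simp add: act_def)
    have g: "G False (Node l a r) dp q = X (midc dp True True ?tau q)" for dp q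
      unfolding sum_inactive[OF Node.prems(1) na] Fs_unfold using True by (simp add: G_Leaf)
    have A: "G False (Node l a r) (Some d) None = X 0" for d unfolding g using True by (simp add: midc_simps)
    have B: "G False (Node l a r) (Some d) (Some True) + G False (Node l a r) (Some d) (Some False) = P" for d
      unfolding g using True XPb[of d] by (simp add: midc_simps)
    have e: "leaf_count (Node l a r) = 1" "size (Node l a r) = 1" using True by auto
    show ?thesis unfolding e using A B by (simp add: X0)
  next
    case False
    have hr: "hr_cond (Node l a r)" using Node.prems(1) by (simp add: good_def is_HR_def)
    have rL: "r \<noteq> Leaf" using hr_node(4)[OF hr HOL.refl False] .
    have ac: "act False l r" using False no_leaf0[OF gl] by (simp add: act_def)
    have IHr: "\<And>d. G False r (Some d) None = X (leaf_count r - 1) * P ^ (size r - leaf_count r)"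
       "\<And>d. G False r (Some d) (Some True) + G False r (Some d) (Some False) = X (leaf_count r - 1) * P ^ (size r - leaf_count r + 1)"
      using Node.IH(2)[OF gr rL] by auto
    have lcr: "1 \<le> leaf_count r" "leaf_count r \<le> size r" using lc_pos[OF rL] lc_le by auto
    have lct: "leaf_count (Node l a r) = leaf_count l + leaf_count r" using False by simp
    have gsplit: "G False (Node l a r) dp q = Fs False l r dp q True + Fs False l r dp q False" for dp q
      by (rule sum_active[OF Node.prems(1) ac])
    show ?thesis
    proof (cases "l = Leaf")
      case True
      have fs: "Fs False l r (Some d) q \<sigma> = X (if d = (\<not> \<sigma>) then 1 else 0) * G False r (Some \<sigma>) q" for d q \<sigma>
        unfolding Fs_unfold using True rL by (simp add: G_Leaf midc_simps)
      have e1: "size (Node l a r) - leaf_count (Node l a r) = size r - leaf_count r + 1" using True lct lcr by simp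
      have e2: "leaf_count (Node l a r) - 1 = leaf_count r - 1" using True lct by simp
      have A: "G False (Node l a r) (Some d) None = X (leaf_count (Node l a r) - 1) * P ^ (size (Node l a r) - leaf_count (Node l a r))" for d
      proof -
        have "G False (Node l a r) (Some d) None = (X (if d = False then 1 else 0) + X (if d = True then 1 else 0)) * (X (leaf_count r - 1) * P ^ (size r - leaf_count r))"
          unfolding gsplit fs IHr(1) by (simp add: algebra_simps)
        also have "X (if d = False then 1 else 0) + X (if d = True then 1 else 0) = P"
          using XPb[of d] by (simp add: add.commute)
        finally show ?thesis unfolding e1 e2 by (simp add: algebra_simps)
      qed
      have B: "G False (Node l a r) (Some d) (Some True) + G False (Node l a r) (Some d) (Some False) = X (leaf_count (Node l a r) - 1) * P ^ (size (Node l a r) - leaf_count (Node l a r) + 1)" for d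
      proof -
        have "G False (Node l a r) (Some d) (Some True) + G False (Node l a r) (Some d) (Some False)
           = X (if d = False then 1 else 0) * (G False r (Some True) (Some True) + G False r (Some True) (Some False))
           + X (if d = True then 1 else 0) * (G False r (Some False) (Some True) + G False r (Some False) (Some False))"
          unfolding gsplit fs by (simp add: algebra_simps)
        also have "\<dots> = (X (if d = False then 1 else 0) + X (if d = True then 1 else 0)) * (X (leaf_count r - 1) * P ^ (size r - leaf_count r + 1))"
          unfolding IHr(2) by (simp add: algebra_simps)
        also have "X (if d = False then 1 else 0) + X (if d = True then 1 else 0) = P"
          using XPb[of d] by (simp add: add.commute)
        finally show ?thesis unfolding e1 e2 by (simp add: algebra_simps)
      qed
      show ?thesis using A B by blast
    next
      case lN: False
      have IHl: "\<And>d. G False l (Some d) (Some True) + G False l (Some d) (Some False) = X (leaf_count l - 1) * P ^ (size l - leaf_count l + 1)"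
        using Node.IH(1)[OF gl lN] by auto
      have lcl: "1 \<le> leaf_count l" "leaf_count l \<le> size l" using lc_pos[OF lN] lc_le by auto
      have fs: "Fs False l r (Some d) q \<sigma> = G False l (Some d) (Some \<sigma>) * X 1 * G False r (Some \<sigma>) q" for d q \<sigma>
        unfolding Fs_unfold using lN by (simp add: midc_simps)
      have e2: "leaf_count (Node l a r) - 1 = (leaf_count l - 1) + 1 + (leaf_count r - 1)" using lct lcl lcr by simp
      have A: "G False (Node l a r) (Some d) None = X (leaf_count (Node l a r) - 1) * P ^ (size (Node l a r) - leaf_count (Node l a r))" for d
      proof -
        have e1: "size (Node l a r) - leaf_count (Node l a r) = (size l - leaf_count l + 1) + (size r - leaf_count r)" using lct lcl lcr by simp
        have "G False (Node l a r) (Some d) None = (G False l (Some d) (Some True) + G False l (Some d) (Some False)) * X 1 * (X (leaf_count r - 1) * P ^ (size r - leaf_count r))"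
          unfolding gsplit fs IHr(1) by (simp add: algebra_simps)
        then show ?thesis unfolding e1 e2 IHl X_add power_add by (simp add: algebra_simps)
      qed
      have B: "G False (Node l a r) (Some d) (Some True) + G False (Node l a r) (Some d) (Some False) = X (leaf_count (Node l a r) - 1) * P ^ (size (Node l a r) - leaf_count (Node l a r) + 1)" for d
      proof -
        have e1: "size (Node l a r) - leaf_count (Node l a r) + 1 = (size l - leaf_count l + 1) + (size r - leaf_count r + 1)" using lct lcl lcr by simp
        have "G False (Node l a r) (Some d) (Some True) + G False (Node l a r) (Some d) (Some False)
          = G False l (Some d) (Some True) * X 1 * (G False r (Some True) (Some True) + G False r (Some True) (Some False))
          + G False l (Some d) (Some False) * X 1 * (G False r (Some False) (Some True) + G False r (Some False) (Some False))"
          unfolding gsplit fs by (simp add: algebra_simps)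
        also have "\<dots> = (G False l (Some d) (Some True) + G False l (Some d) (Some False)) * X 1 * (X (leaf_count r - 1) * P ^ (size r - leaf_count r + 1))"
          unfolding IHr(2) by (simp add: algebra_simps)
        finally show ?thesis unfolding e1 e2 IHl X_add power_add by (simp add: algebra_simps)
      qed
      show ?thesis using A B by blast
    qed
  qed
qed

lemma good_single_true:
  assumes "good True (Node Leaf x Leaf)" shows "x = 0"
  using assms by (simp add: good_def)

lemma CD:
  assumes "good True t" "2 \<le> size t"
  shows "G True t None None = X (leaf_count t - 1) * P ^ (size t - 1 - leaf_count t)
    \<and> G True t None (Some True) + G True t None (Some False) = X (leaf_count t - 1) * P ^ (size t - leaf_count t)"
  using assms
proof (induction t)
  case Leaf then show ?case by simp
next
  case (Node l a r)
  have gl: "good True l" and gr: "good False r" using good_sub[OF Node.prems(1)] by auto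
  have hr: "hr_cond (Node l a r)" using Node.prems(1) by (simp add: good_def is_HR_def)
  let ?tau = "a = Max (set_tree (Node l a r))"
  show ?case
  proof (cases "l = Leaf")
    case True
    have rL: "r \<noteq> Leaf" using True Node.prems(2) by auto
    have na: "\<not> act True l r" using True by (simp add: act_def)
    have g: "G True (Node l a r) None q = G False r (Some ?tau) q" for q
      unfolding sum_inactive[OF Node.prems(1) na] Fs_unfold using True rL by (simp add: G_Leaf midc_simps X0)
    note ab = AB[OF gr rL]
    have lcr: "1 \<le> leaf_count r" "leaf_count r \<le> size r" using lc_pos[OF rL] lc_le by auto
    have e: "leaf_count (Node l a r) - 1 = leaf_count r - 1" "size (Node l a r) - 1 - leaf_count (Node l a r) = size r - leaf_count r"
        "size (Node l a r) - leaf_count (Node l a r) = size r - leaf_count r + 1" using True rL lcr by auto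
    show ?thesis unfolding g e using ab by blast
  next
    case lN: False
    have rL: "r \<noteq> Leaf" using hr_node(4)[OF hr HOL.refl] lN by blast
    note ab = AB[OF gr rL]
    have lcr: "1 \<le> leaf_count r" "leaf_count r \<le> size r" using lc_pos[OF rL] lc_le by auto
    have lct: "leaf_count (Node l a r) = leaf_count l + leaf_count r" using lN by simp
    show ?thesis
    proof (cases "l = Node Leaf 0 Leaf")
      case True
      have na: "\<not> act True l r" using True by (simp add: act_def)
      have o0: "orb True (Node Leaf 0 Leaf) = {Node Leaf 0 Leaf}" by (simp add: act_def)
      have c0: "cnt None (Node Leaf 0 Leaf) q' = 0" for q'
        unfolding cnt_node[OF HOL.refl] by (simp add: midc_simps)
      have g0: "G True l None (Some ?tau) = 1" unfolding True G_def o0 by (simp add: c0 X0)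
      have g: "G True (Node l a r) None q = X 1 * G False r (Some ?tau) q" for q
        unfolding sum_inactive[OF Node.prems(1) na] Fs_unfold g0 using True by (simp add: midc_simps)
      have e: "leaf_count (Node l a r) - 1 = 1 + (leaf_count r - 1)" "size (Node l a r) - 1 - leaf_count (Node l a r) = size r - leaf_count r"
        "size (Node l a r) - leaf_count (Node l a r) = size r - leaf_count r + 1"
        using True lct lcr by auto
      have C: "G True (Node l a r) None None = X 1 * (X (leaf_count r - 1) * P ^ (size r - leaf_count r))"
        unfolding g ab[THEN conjunct1, rule_format] ..
      have D: "G True (Node l a r) None (Some True) + G True (Node l a r) None (Some False)
          = X 1 * (G False r (Some ?tau) (Some True) + G False r (Some ?tau) (Some False))"
        unfolding g by (simp only: distrib_left)
      also have "\<dots> = X 1 * (X (leaf_count r - 1) * P ^ (size r - leaf_count r + 1))"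
        unfolding ab[THEN conjunct2, rule_format] ..
      finally show ?thesis using C unfolding e X_add mult.assoc by blast
    next
      case l0: False
      have sl: "2 \<le> size l"
      proof (rule ccontr)
        assume "\<not> 2 \<le> size l"
        moreover have "size l \<noteq> 0" using lN by simp
        ultimately have "size l = 1" by linarith
        obtain l1 x r1 where n: "l = Node l1 x r1" using lN by (cases l) auto
        with \<open>size l = 1\<close> have "size l1 = 0" "size r1 = 0" by auto
        then have "l = Node Leaf x Leaf" using n by simp
        then show False using good_single_true[of x] gl l0 by auto
      qed
      have ac: "act True l r" using lN l0 by (simp add: act_def)
      have IHl: "G True l None (Some True) + G True l None (Some False) = X (leaf_count l - 1) * P ^ (size l - leaf_count l)"
        using Node.IH(1)[OF gl sl] by auto
      have lcl: "1 \<le> leaf_count l" "leaf_count l \<le> size l" using lc_pos[OF lN] lc_le by auto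
      have gsplit: "G True (Node l a r) None q = Fs True l r None q True + Fs True l r None q False" for q
        by (rule sum_active[OF Node.prems(1) ac])
      have fs: "Fs True l r None q \<sigma> = G True l None (Some \<sigma>) * X 1 * G False r (Some \<sigma>) q" for q \<sigma>
        unfolding Fs_unfold using lN by (simp add: midc_simps)
      have e2: "leaf_count (Node l a r) - 1 = (leaf_count l - 1) + 1 + (leaf_count r - 1)" using lct lcl lcr by simp
      have C: "G True (Node l a r) None None = X (leaf_count (Node l a r) - 1) * P ^ (size (Node l a r) - 1 - leaf_count (Node l a r))"
      proof -
        have e1: "size (Node l a r) - 1 - leaf_count (Node l a r) = (size l - leaf_count l) + (size r - leaf_count r)" using lct lcl lcr by simp
        have "G True (Node l a r) None None = (G True l None (Some True) + G True l None (Some False)) * X 1 * (X (leaf_count r - 1) * P ^ (size r - leaf_count r))"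
          unfolding gsplit fs using ab by (simp add: algebra_simps)
        then show ?thesis unfolding e1 e2 IHl X_add power_add by (simp add: algebra_simps)
      qed
      have D: "G True (Node l a r) None (Some True) + G True (Node l a r) None (Some False) = X (leaf_count (Node l a r) - 1) * P ^ (size (Node l a r) - leaf_count (Node l a r))"
      proof -
        have e1: "size (Node l a r) - leaf_count (Node l a r) = (size l - leaf_count l) + (size r - leaf_count r + 1)" using lct lcl lcr by simp
        have "G True (Node l a r) None (Some True) + G True (Node l a r) None (Some False)
          = G True l None (Some True) * X 1 * (G False r (Some True) (Some True) + G False r (Some True) (Some False))
          + G True l None (Some False) * X 1 * (G False r (Some False) (Some True) + G False r (Some False) (Some False))"
          unfolding gsplit fs by (simp add: algebra_simps)
        also have "\<dots> = (G True l None (Some True) + G True l None (Some False)) * X 1 * (X (leaf_count r - 1) * P ^ (size r - leaf_count r + 1))"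
          using ab by (simp add: algebra_simps)
        finally show ?thesis unfolding e1 e2 IHl X_add power_add by (simp add: algebra_simps)
      qed
      show ?thesis using C D by blast
    qed
  qed
qed

definition E3 :: "int \<Rightarrow> int \<Rightarrow> int \<Rightarrow> bool" where
  "E3 p x q = ((p < x \<and> x > q) \<or> (p > x \<and> x < q))"

definition e3 :: "int option \<Rightarrow> int \<Rightarrow> int option \<Rightarrow> nat" where
  "e3 po x qo = (case po of None \<Rightarrow> 0 | Some p \<Rightarrow> (case qo of None \<Rightarrow> 0 | Some q \<Rightarrow> if E3 p x q then 1 else 0))"

definition nb :: "int list \<Rightarrow> int option \<Rightarrow> int option" where
  "nb xs qo = (case xs of [] \<Rightarrow> qo | y # _ \<Rightarrow> Some y)"

definition lst :: "int option \<Rightarrow> int list \<Rightarrow> int option" where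
  "lst po xs = (if xs = [] then po else Some (last xs))"

fun pv :: "int option \<Rightarrow> int list \<Rightarrow> int option \<Rightarrow> nat" where
  "pv po [] qo = 0"
| "pv po (x # xs) qo = e3 po x (nb xs qo) + pv (Some x) xs qo"

lemma pv_append: "pv po (u @ v) qo = pv po u (nb v qo) + pv (lst po u) v qo"
proof (induction u arbitrary: po)
  case Nil then show ?case by (simp add: lst_def)
next
  case (Cons x u)
  have "nb (u @ v) qo = nb u (nb v qo)" by (cases u) (auto simp: nb_def)
  moreover have "lst po (x # u) = lst (Some x) u" by (simp add: lst_def)
  ultimately show ?case using Cons.IH by simp
qed

definition ctx :: "int option \<Rightarrow> int tree \<Rightarrow> bool" where
  "ctx po t = (case po of None \<Rightarrow> True | Some p \<Rightarrow> (\<forall>x\<in>set_tree t. x < p) \<or> (\<forall>x\<in>set_tree t. p < x))"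

definition side :: "int option \<Rightarrow> int tree \<Rightarrow> bool option" where
  "side po t = map_option (\<lambda>p. \<forall>x\<in>set_tree t. x < p) po"

lemma cnt_Leaf_any: "cnt dp Leaf dq = cnt dp' Leaf dq'" by simp

lemma side_sub:
  assumes "ctx po t" "set_tree l \<subseteq> set_tree t" "l \<noteq> Leaf"
  shows "side po l = side po t" "ctx po l"
proof -
  obtain y where y: "y \<in> set_tree l" using assms(3) by (cases l) auto
  show "side po l = side po t"
  proof (cases po)
    case None then show ?thesis by (simp add: side_def)
  next
    case (Some p)
    have yt: "y \<in> set_tree t" using y assms(2) by auto
    have c: "(\<forall>x\<in>set_tree t. x < p) \<or> (\<forall>x\<in>set_tree t. p < x)" using assms(1) Some by (simp add: ctx_def)
    have "(\<forall>x\<in>set_tree l. x < p) = (\<forall>x\<in>set_tree t. x < p)"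
    proof
      assume al: "\<forall>x\<in>set_tree l. x < p"
      then have "y < p" using y by auto
      then have "\<not> (\<forall>x\<in>set_tree t. p < x)" using yt less_asym by blast
      then show "\<forall>x\<in>set_tree t. x < p" using c by blast
    next
      assume "\<forall>x\<in>set_tree t. x < p" then show "\<forall>x\<in>set_tree l. x < p" using assms(2) by auto
    qed
    then show ?thesis using Some unfolding side_def by simp
  qed
  show "ctx po l" using assms unfolding ctx_def by (auto split: option.splits)
qed

lemma pv_cnt:
  assumes "hr_cond t" "distinct (inorder t)" "ctx po t" "ctx qo t"
  shows "pv po (inorder t) qo = cnt (side po t) t (side qo t)"
  using assms
proof (induction t arbitrary: po qo)
  case Leaf then show ?case by simp
next
  case (Node l a r)
  define S where "S = set_tree (Node l a r)"
  have sS: "set_tree (Node l a r) = S" unfolding S_def ..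
  note h = hr_node[OF Node.prems(1) sS]
  have d: "distinct (inorder l)" "distinct (inorder r)" "a \<notin> set_tree l" "a \<notin> set_tree r"
    "set_tree l \<inter> set_tree r = {}" using Node.prems(2) by auto
  have fS: "finite S" "S \<noteq> {}" unfolding S_def by auto
  have lS: "set_tree l \<subseteq> S" and rS: "set_tree r \<subseteq> S" and aS: "a \<in> S" unfolding S_def by auto
  have ext: "\<And>x. x \<in> S \<Longrightarrow> x \<noteq> a \<Longrightarrow> (x < a) = (a = Max S)"
  proof -
    fix x assume x: "x \<in> S" "x \<noteq> a"
    have "Min S \<le> x" "x \<le> Max S" using x fS by auto
    then show "(x < a) = (a = Max S)" using h(3) x(2) by auto
  qed
  have ctxa_l: "ctx (Some a) l" unfolding ctx_def using ext lS d(3)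
    by (cases "a = Max S") (auto, metis subsetD not_less_iff_gr_or_eq)
  have ctxa_r: "ctx (Some a) r" unfolding ctx_def using ext rS d(4)
    by (cases "a = Max S") (auto, metis subsetD not_less_iff_gr_or_eq)
  have sidea_l: "l \<noteq> Leaf \<Longrightarrow> side (Some a) l = Some (a = Max S)"
  proof -
    assume "l \<noteq> Leaf"
    then obtain y where y: "y \<in> set_tree l" by (cases l) auto
    show ?thesis unfolding side_def using ext lS d(3) y by auto
  qed
  have sidea_r: "r \<noteq> Leaf \<Longrightarrow> side (Some a) r = Some (a = Max S)"
  proof -
    assume "r \<noteq> Leaf"
    then obtain y where y: "y \<in> set_tree r" by (cases r) auto
    show ?thesis unfolding side_def using ext rS d(4) y by auto
  qed
  have IHl: "pv po (inorder l) (Some a) = cnt (side po (Node l a r)) l (Some (a = Max S))"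
  proof (cases "l = Leaf")
    case True then show ?thesis by simp
  next
    case False
    note ss = side_sub[OF Node.prems(3) _ False]
    show ?thesis using Node.IH(1)[OF h(1) d(1) ss(2) ctxa_l] ss(1) sidea_l[OF False] by auto
  qed
  have IHr: "pv (Some a) (inorder r) qo = cnt (Some (a = Max S)) r (side qo (Node l a r))"
  proof (cases "r = Leaf")
    case True then show ?thesis by simp
  next
    case False
    note ss = side_sub[OF Node.prems(4) _ False]
    show ?thesis using Node.IH(2)[OF h(2) d(2) ctxa_r ss(2)] ss(1) sidea_r[OF False] by auto
  qed
  have mid: "e3 (lst po (inorder l)) a (nb (inorder r) qo) = midc (side po (Node l a r)) (l = Leaf) (r = Leaf) (a = Max S) (side qo (Node l a r))"
  proof (cases "l = Leaf")
    case lL: True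
    show ?thesis
    proof (cases "r = Leaf")
      case rL: True
      have S1: "S = {a}" using lL rL S_def by simp
      show ?thesis
      proof (cases po)
        case None then show ?thesis using lL rL by (simp add: e3_def lst_def nb_def midc_def side_def)
      next
        case (Some p)
        show ?thesis
        proof (cases qo)
          case None then show ?thesis using lL rL Some by (simp add: e3_def lst_def nb_def midc_def side_def)
        next
          case Some2: (Some q)
          have "p \<noteq> a" "q \<noteq> a" using Node.prems(3,4) Some Some2 lL rL by (auto simp: ctx_def)
          then show ?thesis using lL rL Some Some2 by (auto simp: e3_def lst_def nb_def midc_def side_def E3_def)
        qed
      qed
    next
      case rN: False
      obtain y ys where ir: "inorder r = y # ys" using rN by (cases r) (auto, metis Nil_is_append_conv list.exhaust)
      have yr: "y \<in> set_tree r" using ir by (metis list.set_intros(1) set_inorder)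
      have ya: "(y < a) = (a = Max S)"
        proof (rule ext)
          show "y \<in> S" using yr rS by auto
          show "y \<noteq> a" using yr d(4) by auto
        qed
      show ?thesis
      proof (cases po)
        case None then show ?thesis using lL rN ir by (simp add: e3_def lst_def nb_def midc_def side_def)
      next
        case (Some p)
        have pa: "p \<noteq> a" "(\<forall>x\<in>set_tree (Node l a r). x < p) = (a < p)"
          using Node.prems(3) Some lL by (auto simp: ctx_def)
        have yna: "y \<noteq> a" using yr d(4) by auto
        show ?thesis using lL rN ir Some pa ya yna
          by (auto simp: e3_def lst_def nb_def midc_def side_def E3_def)
      qed
    qed
  next
    case lN: False
    have rN: "r \<noteq> Leaf" using h(4) lN by blast
    have ln: "inorder l \<noteq> []" using lN by (cases l) auto
    have lx: "last (inorder l) \<in> set_tree l" using ln by (metis last_in_set set_inorder)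
    obtain y ys where ir: "inorder r = y # ys" using rN by (cases r) (auto, metis Nil_is_append_conv list.exhaust)
    have yr: "y \<in> set_tree r" using ir by (metis list.set_intros(1) set_inorder)
    have ya: "(y < a) = (a = Max S)"
        proof (rule ext)
          show "y \<in> S" using yr rS by auto
          show "y \<noteq> a" using yr d(4) by auto
        qed
    have xa: "(last (inorder l) < a) = (a = Max S)"
    proof (rule ext)
      show "last (inorder l) \<in> S" using lx lS by auto
      show "last (inorder l) \<noteq> a" using lx d(3) by auto
    qed
    have "y \<noteq> a" "last (inorder l) \<noteq> a" using yr lx d by auto
    then have "E3 (last (inorder l)) a y" using ya xa unfolding E3_def by auto
    then show ?thesis using lN ln ir by (simp add: e3_def lst_def nb_def midc_def)
  qed
  have "pv po (inorder (Node l a r)) qo = pv po (inorder l) (Some a) + (e3 (lst po (inorder l)) a (nb (inorder r) qo) + pv (Some a) (inorder r) qo)"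
    by (simp add: pv_append nb_def)
  also have "\<dots> = cnt (side po (Node l a r)) (Node l a r) (side qo (Node l a r))"
    unfolding IHl IHr mid cnt_node[OF sS] by simp
  finally show ?case .
qed

lemma pv_card:
  "pv (Some c) xs None = card {i. 1 \<le> i \<and> i \<le> length xs - 1 \<and> E3 ((c#xs)!(i-1)) ((c#xs)!i) ((c#xs)!(i+1))}"
proof (induction xs arbitrary: c)
  case Nil then show ?case by simp
next
  case (Cons x xs)
  let ?A = "{i. 1 \<le> i \<and> i \<le> length (x#xs) - 1 \<and> E3 ((c#x#xs)!(i-1)) ((c#x#xs)!i) ((c#x#xs)!(i+1))}"
  let ?B = "{i. 1 \<le> i \<and> i \<le> length xs - 1 \<and> E3 ((x#xs)!(i-1)) ((x#xs)!i) ((x#xs)!(i+1))}"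
  let ?C = "{i::nat. i = 1 \<and> xs \<noteq> [] \<and> E3 c x (hd xs)}"
  have eq: "?A = ?C \<union> Suc ` ?B"
  proof (rule set_eqI)
    fix i
    show "i \<in> ?A \<longleftrightarrow> i \<in> ?C \<union> Suc ` ?B"
    proof (cases i)
      case 0 then show ?thesis by auto
    next
      case (Suc k)
      show ?thesis
      proof (cases k)
        case 0
        then show ?thesis using Suc by (cases xs) auto
      next
        case (Suc j)
        have "i \<in> ?A \<longleftrightarrow> Suc (Suc j) \<le> length xs \<and> E3 ((x#xs)!j) (xs!j) (xs!(Suc j))"
          using \<open>i = Suc k\<close> Suc by simp
        moreover have "i \<in> Suc ` ?B \<longleftrightarrow> Suc j \<in> ?B" using \<open>i = Suc k\<close> Suc by auto
        moreover have "Suc j \<in> ?B \<longleftrightarrow> Suc (Suc j) \<le> length xs \<and> E3 ((x#xs)!j) (xs!j) (xs!(Suc j))"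
          by auto
        moreover have "i \<notin> ?C" using \<open>i = Suc k\<close> Suc by simp
        ultimately show ?thesis by blast
      qed
    qed
  qed
  have fin: "finite ?C" by simp
  have disj: "?C \<inter> Suc ` ?B = {}" by auto
  have cC: "card ?C = e3 (Some c) x (nb xs None)"
  proof (cases "xs \<noteq> [] \<and> E3 c x (hd xs)")
    case True
    then have c1: "?C = {1}" by auto
    have "e3 (Some c) x (nb xs None) = 1" using True by (cases xs) (auto simp: e3_def nb_def)
    then show ?thesis unfolding c1 by simp
  next
    case False
    then have c1: "?C = {}" by auto
    have "e3 (Some c) x (nb xs None) = 0" using False by (cases xs) (auto simp: e3_def nb_def)
    then show ?thesis unfolding c1 by simp
  qed
  have "card ?A = card ?C + card (Suc ` ?B)"
  proof -
    have fB: "finite ?B" by (rule finite_subset[of _ "{..length xs}"]) auto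
    show ?thesis unfolding eq using card_Un_disjoint[OF fin finite_imageI[OF fB] disj] by simp
  qed
  also have "card (Suc ` ?B) = card ?B" by (simp add: card_image)
  finally show ?case using cC Cons.IH[of x] by simp
qed

lemma runB_pv: "runB p = 1 + pv (Some 0) p None"
  unfolding runB_def Let_def pv_card E3_def by simp

lemma runB_pv0: "runB xs = 1 + pv None (0 # xs) None"
  using runB_pv by (simp add: e3_def)

lemma tw: "y \<notin> set us \<Longrightarrow> takeWhile (\<lambda>z. z \<noteq> y) (us @ y # vs) = us"
  by (induction us) auto

lemma split_unique:
  assumes "distinct (us @ y # vs)" "us @ y # vs = us' @ y # vs'"
  shows "us = us' \<and> vs = vs'"
proof -
  have "y \<notin> set us" using assms(1) by simp
  moreover have "distinct (us' @ y # vs')" using assms by metis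
  then have "y \<notin> set us'" by simp
  ultimately have "us = us'" using tw assms(2) by metis
  then show ?thesis using assms(2) by simp
qed

lemma hr_unique:
  assumes "hr_cond t1" "hr_cond t2" "distinct (inorder t1)" "inorder t1 = inorder t2"
  shows "t1 = t2"
  using assms
proof (induction t1 arbitrary: t2)
  case Leaf then show ?case by (cases t2) auto
next
  case (Node l1 a1 r1)
  obtain l2 a2 r2 where t2: "t2 = Node l2 a2 r2" using Node.prems(4) by (cases t2) auto
  define S where "S = set_tree (Node l1 a1 r1)"
  have S1: "set_tree (Node l1 a1 r1) = S" unfolding S_def ..
  have ss: "set (inorder (Node l2 a2 r2)) = set (inorder (Node l1 a1 r1))" using Node.prems(4) t2 by simp
  have S2: "set_tree (Node l2 a2 r2) = S" unfolding S_def using ss by (simp only: set_inorder)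
  note h1 = hr_node[OF Node.prems(1) S1] and h2 = hr_node[OF Node.prems(2)[unfolded t2] S2]
  have w: "inorder l1 @ a1 # inorder r1 = inorder l2 @ a2 # inorder r2" using Node.prems(4) t2 by simp
  have d: "distinct (inorder l1 @ a1 # inorder r1)" using Node.prems(3) by simp
  show ?case
  proof (cases "l1 = Leaf \<and> r1 = Leaf")
    case True
    then have "inorder l2 @ a2 # inorder r2 = [a1]" using w by simp
    then have "inorder l2 = []" "a2 = a1" "inorder r2 = []" by (auto simp: append_eq_Cons_conv)
    then show ?thesis using True t2 by simp
  next
    case False
    have nl2: "\<not> (l2 = Leaf \<and> r2 = Leaf)"
    proof
      assume "l2 = Leaf \<and> r2 = Leaf"
      then have "inorder l1 @ a1 # inorder r1 = [a2]" using w by simp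
      then have "inorder l1 = []" "inorder r1 = []" by (auto simp: append_eq_Cons_conv)
      then show False using False by simp
    qed
    have fS: "finite S" using S1[symmetric] by simp
    obtain x where x: "x \<in> set_tree r1" using h1(4)[OF False] by (cases r1) auto
    have a1S: "a1 \<in> S" and xS: "x \<in> S" using x S1 by auto
    have xa: "x \<noteq> a1" using x d by auto
    have ne: "Min S \<noteq> Max S" by (rule minmax_ne[OF fS a1S xS xa])
    have a12: "a1 = a2"
    proof (rule ccontr)
      assume neq: "a1 \<noteq> a2"
      have "a2 \<in> set_tree r1 \<and> a1 \<in> set_tree r2"
      proof (cases "a1 = Min S")
        case True
        then have "a2 = Max S" using h2(3) neq by auto
        then show ?thesis using True h1(5)[OF False True] h2(6)[OF nl2] by simp
      next
        case c: False
        then have a1M: "a1 = Max S" using h1(3) by auto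
        then have "a2 = Min S" using h2(3) neq by auto
        then show ?thesis using a1M h1(6)[OF False a1M] h2(5)[OF nl2] by simp
      qed
      then have a2r1: "a2 \<in> set (inorder r1)" and a1r2: "a1 \<in> set (inorder r2)" by auto
      obtain xs ys where ir1: "inorder r1 = xs @ a2 # ys" using split_list[OF a2r1] by blast
      have ee: "(inorder l1 @ a1 # xs) @ a2 # ys = inorder l2 @ a2 # inorder r2" using w ir1 by simp
      have dd: "distinct ((inorder l1 @ a1 # xs) @ a2 # ys)" using d ir1 by simp
      have "inorder l1 @ a1 # xs = inorder l2" using split_unique[OF dd ee] by (rule conjunct1)
      then have "a1 \<in> set (inorder l2)" by (metis Un_iff list.set_intros(1) set_append)
      moreover have "distinct (inorder l2 @ a2 # inorder r2)" using d unfolding w .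
      ultimately show False using a1r2 by auto
    qed
    have w': "inorder l1 @ a1 # inorder r1 = inorder l2 @ a1 # inorder r2" using w a12 by simp
    have "inorder l1 = inorder l2 \<and> inorder r1 = inorder r2" by (rule split_unique[OF d w'])
    moreover have "distinct (inorder l1)" "distinct (inorder r1)" using d by auto
    ultimately have "l1 = l2" "r1 = r2"
      using Node.IH(1)[OF h1(1) h2(1)] Node.IH(2)[OF h1(2) h2(2)] by auto
    then show ?thesis using t2 a12 by simp
  qed
qed

lemma hr_exists:
  assumes "distinct (w::int list)"
  shows "\<exists>t. hr_cond t \<and> inorder t = w"
  using assms
proof (induction "length w" arbitrary: w rule: less_induct)
  case less
  show ?case
  proof (cases "length w \<le> 1")
    case True
    then consider "w = []" | x where "w = [x]" by (cases w) auto
    then show ?thesis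
    proof cases
      case 1 then show ?thesis by (intro exI[of _ Leaf]) simp
    next
      case (2 x) then show ?thesis by (intro exI[of _ "Node Leaf x Leaf"]) simp
    qed
  next
    case False
    define S where "S = set w"
    have fS: "finite S" unfolding S_def by simp
    obtain y z ws where w3: "w = y # z # ws" using False by (cases w; cases "tl w") auto
    have yz: "y \<noteq> z" using less.prems w3 by simp
    have ne: "Min S \<noteq> Max S" using minmax_ne[OF fS, of y z] yz w3 S_def by auto
    have Sne: "S \<noteq> {}" using w3 S_def by auto
    have mS: "Min S \<in> S" by (rule Min_in[OF fS Sne])
    have MS: "Max S \<in> S" by (rule Max_in[OF fS Sne])
    obtain us vs where wm: "w = us @ Min S # vs" using mS S_def by (metis split_list)
    have sub: "\<And>xs. length xs < length w \<Longrightarrow> distinct xs \<Longrightarrow> \<exists>t. hr_cond t \<and> inorder t = xs"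
      using less.hyps by blast
    show ?thesis
    proof (cases "Max S \<in> set vs")
      case True
      have l1: "length us < length w" "distinct us" using wm less.prems by auto
      have l2: "length vs < length w" "distinct vs" using wm less.prems by auto
      obtain tL where tL: "hr_cond tL" "inorder tL = us" using sub[OF l1] by blast
      obtain tR where tR: "hr_cond tR" "inorder tR = vs" using sub[OF l2] by blast
      have e: "inorder (Node tL (Min S) tR) = w" using tL tR wm by simp
      have st: "set_tree (Node tL (Min S) tR) = S"
      proof -
        have "set_tree (Node tL (Min S) tR) = set (inorder (Node tL (Min S) tR))" by (simp only: set_inorder)
        also have "\<dots> = set w" by (simp only: e)
        also have "\<dots> = S" by (simp only: S_def)
        finally show ?thesis .
      qed
      have MR: "Max S \<in> set_tree tR" using True tR(2) by (metis set_inorder)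
      have trL: "tR \<noteq> Leaf" using MR by auto
      have "hr_cond (Node tL (Min S) tR)"
      proof (rule hr_nodeI[OF tL(1) tR(1) st])
        show "Min S = Min S \<or> Min S = Max S" by simp
        show "\<not> (tL = Leaf \<and> tR = Leaf) \<Longrightarrow> tR \<noteq> Leaf" using trL by simp
        show "Min S = Min S \<Longrightarrow> Max S \<in> set_tree tR" using MR by simp
        show "Min S = Max S \<Longrightarrow> Min S \<in> set_tree tR" using ne by simp
      qed
      then show ?thesis using e by blast
    next
      case False
      have "Max S \<in> set w" using MS S_def by simp
      then have "Max S \<in> set us \<or> Max S = Min S \<or> Max S \<in> set vs" using wm by auto
      then have "Max S \<in> set us" using ne False by auto
      then obtain us1 us2 where u: "us = us1 @ Max S # us2" using split_list by metis
      have wM: "w = us1 @ Max S # (us2 @ Min S # vs)" using wm u by simp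
      have l1: "length us1 < length w" "distinct us1" using wM less.prems by auto
      have l2: "length (us2 @ Min S # vs) < length w" "distinct (us2 @ Min S # vs)" using wM less.prems by auto
      obtain tL where tL: "hr_cond tL" "inorder tL = us1" using sub[OF l1] by blast
      obtain tR where tR: "hr_cond tR" "inorder tR = us2 @ Min S # vs" using sub[OF l2] by blast
      have e: "inorder (Node tL (Max S) tR) = w" using tL tR wM by simp
      have st: "set_tree (Node tL (Max S) tR) = S"
      proof -
        have "set_tree (Node tL (Max S) tR) = set (inorder (Node tL (Max S) tR))" by (simp only: set_inorder)
        also have "\<dots> = set w" by (simp only: e)
        also have "\<dots> = S" by (simp only: S_def)
        finally show ?thesis .
      qed
      have mR: "Min S \<in> set_tree tR"
      proof -
        have "Min S \<in> set (inorder tR)" unfolding tR(2) by simp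
        then show ?thesis by (simp only: set_inorder)
      qed
      have trL: "tR \<noteq> Leaf" using mR by auto
      have "hr_cond (Node tL (Max S) tR)"
      proof (rule hr_nodeI[OF tL(1) tR(1) st])
        show "Max S = Min S \<or> Max S = Max S" by simp
        show "\<not> (tL = Leaf \<and> tR = Leaf) \<Longrightarrow> tR \<noteq> Leaf" using trL by simp
        show "Max S = Min S \<Longrightarrow> Max S \<in> set_tree tR" using ne by simp
        show "Max S = Max S \<Longrightarrow> Min S \<in> set_tree tR" using mR by simp
      qed
      then show ?thesis using e by blast
    qed
  qed
qed

lemma T_of_props:
  assumes "distinct (0 # p)"
  shows "is_HR (T_of p) \<and> inorder (T_of p) = 0 # p"
proof -
  have ex: "\<exists>!t. is_HR t \<and> inorder t = 0 # p"
  proof (rule ex_ex1I)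
    obtain t where t: "hr_cond t" "inorder t = 0 # p" using hr_exists[OF assms] by blast
    then have "is_HR t \<and> inorder t = 0 # p" using assms by (simp add: is_HR_def)
    then show "\<exists>t. is_HR t \<and> inorder t = 0 # p" by blast
    fix t1 t2 assume "is_HR t1 \<and> inorder t1 = 0 # p" "is_HR t2 \<and> inorder t2 = 0 # p"
    then show "t1 = t2" using hr_unique by (auto simp: is_HR_def)
  qed
  show ?thesis unfolding T_of_def by (rule theI'[OF ex])
qed

lemma sp_distinct:
  assumes "p \<in> signed_perms n"
  shows "distinct (0 # p)" "length p = n"
proof -
  have d: "distinct (map (\<lambda>x. nat \<bar>x\<bar>) p)" and s: "set (map (\<lambda>x. nat \<bar>x\<bar>) p) = {1..n}" and l: "length p = n"
    using assms by (auto simp: signed_perms_def)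
  have "distinct p" using d by (simp add: distinct_map)
  moreover have "0 \<notin> set p"
  proof
    assume "0 \<in> set p"
    then have "nat \<bar>0::int\<bar> \<in> set (map (\<lambda>x. nat \<bar>x\<bar>) p)" by (metis image_eqI list.set_map)
    then show False using s by simp
  qed
  ultimately show "distinct (0 # p)" by simp
  show "length p = n" by (rule l)
qed

theorem mainTheorem11:
  fixes n :: nat and p :: "int list"
  assumes "n \<ge> 1" and "p \<in> signed_perms n"
  shows "(\<Sum>s\<in>Orb n (T_of p). monom (1::int) (runB (tl (inorder s))))
           = monom 1 (leaf_count (T_of p)) * [:1, 1:] ^ (n - leaf_count (T_of p))"
proof -
  note sd = sp_distinct[OF assms(2)]
  define T where "T = T_of p"
  have TP: "is_HR T" "inorder T = 0 # p" using T_of_props[OF sd(1)] unfolding T_def by auto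
  have sz: "size T = Suc n" using TP(2) sd(2) by (metis length_Cons length_inorder)
  have gT: "good True T" using TP by (simp add: good_def)
  have TL: "T \<noteq> Leaf" using sz by auto
  have s2: "2 \<le> size T" using sz assms(1) by simp
  have O: "Orb n T = orb True T" by (rule Orb_eq[OF gT sz])
  have tm: "monom (1::int) (runB (tl (inorder s))) = X 1 * X (cnt None s None)" if s: "s \<in> orb True T" for s
  proof -
    note op = orb_props[OF gT s]
    have gs: "good True s" and ss: "size s = size T" using op by auto
    have sL: "s \<noteq> Leaf" using ss TL by auto
    have ne: "inorder s \<noteq> []" using sL by (cases s) auto
    have h0: "hd (inorder s) = 0" using gs sL by (simp add: good_def)
    have ws: "inorder s = 0 # tl (inorder s)" using ne h0 by (metis list.collapse)
    have hs: "hr_cond s" "distinct (inorder s)" using gs by (auto simp: good_def is_HR_def)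
    have "runB (tl (inorder s)) = 1 + pv None (inorder s) None"
      using runB_pv0[of "tl (inorder s)"] ws by simp
    also have "pv None (inorder s) None = cnt None s None"
      using pv_cnt[OF hs, of None None] by (simp add: ctx_def side_def)
    finally have r: "runB (tl (inorder s)) = 1 + cnt None s None" .
    show ?thesis unfolding r X_def[symmetric] X_add ..
  qed
  have "(\<Sum>s\<in>Orb n T. monom (1::int) (runB (tl (inorder s)))) = (\<Sum>s\<in>orb True T. X 1 * X (cnt None s None))"
    unfolding O by (rule sum.cong[OF HOL.refl tm])
  also have "\<dots> = X 1 * G True T None None" by (simp add: G_def sum_distrib_left)
  also have "\<dots> = X 1 * (X (leaf_count T - 1) * P ^ (size T - 1 - leaf_count T))"
    using CD[OF gT s2] by simp
  also have "\<dots> = X (leaf_count T) * P ^ (n - leaf_count T)"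
  proof -
    have "1 \<le> leaf_count T" using lc_pos[OF TL] .
    then have "X 1 * X (leaf_count T - 1) = X (leaf_count T)" by (simp add: X_add[symmetric])
    moreover have "size T - 1 - leaf_count T = n - leaf_count T" using sz by simp
    ultimately show ?thesis by (simp add: mult.assoc[symmetric])
  qed
  finally show ?thesis unfolding T_def X_def .
qed

end
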